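(* Let $\Phi$ be a real, additive gain graph on $n$ vertices and $Q_1,\dots,Q_n\in\mathbb{E}^d$. (i) Ideal general position implies simple position. (ii) General position with respect to $\Phi$ and projective general position with respect to $\Phi$ are equivalent. (iii) Completely general position with respect to $\Phi$ (ideal general position together with general position with respect to $\Phi$) and projective completely general position with respect to $\Phi$ (ideal general position together with projective general position with respect to $\Phi$) are equivalent. (iv) If $\Phi$ is complete, general position with respect to $\Phi$ implies ideal general position; this implication does not hold in general when $\Phi$ is disconnected or separable.
   Context: A real, additive gain graph $\Phi$ on $V=\{1,\dots,n\}$: finite graph with edge set $E$ (multiple edges allowed, every edge with two distinct endpoints) and gains $\phi(e;i,j)\in\mathbb{R}$ with $\phi(e;j,i)=-\phi(e;i,j)$. It is complete if every two vertices are adjacent, separable if some vertex $v$ has $\Phi\setminus v$ disconnected. $S\subseteq E$ is balanced if every circle in $S$ has gain sum $0$; $c(S)$ counts components of $(V,S)$, isolated vertices included. With $\psi_{ij}(P)=d(P,Q_i)^2-d(P,Q_j)^2$, $\mathcal{H}=\mathcal{H}(\Phi;\mathbf{Q})$ consists of hyperplanes $h(e)=\{P:\psi_{ij}(P)=\phi(e;i,j)\}$ for edges $e$ with endpoints $i,j$. $\mathcal{L}(\mathcal{H})$: nonempty intersections of subsets of $\mathcal{H}$ (including $\mathbb{E}^d$) ordered by reverse inclusion; $E(s)=\{e:h(e)\supseteq s\}$. Simple position: every subset of at most $d+1$ of the $Q_i$ is affinely independent. Ideal general position: the points are distinct and, with $\mathbb{E}^d\subset\mathbb{P}^d$, $h_\infty$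 the ideal hyperplane and $p_{ij}$ the ideal point of line $Q_iQ_j$, for every set $T$ of unordered pairs the projective span of $\{p_{ij}:\{i,j\}\in T\}$ has dimension $\min(n-c(T),d)-1$, $c(T)$ the number of components of $(\{1,\dots,n\},T)$. Balanced flat: balanced $S\subseteq E$ such that every $e\notin S$ with both endpoints in one component of $(V,S)$ makes $S\cup\{e\}$ unbalanced; rank $n-c(S)$. General position w.r.t. $\Phi$: $s\mapsto E(s)$ is a poset isomorphism from $\mathcal{L}(\mathcal{H})$ onto the poset of balanced flats of rank $\le d$. Complete lift matroid $L_0(\Phi)$: ground set $E\cup\{e_0\}$, rank $r(S)=n-c(S\setminus\{e_0\})+\epsilon$ with $\epsilon=0$ if $S$ is a balanced subset of $E$, else $1$; $T_{d+1}(\mathrm{Lat}\,L_0(\Phi))$ is its lattice of flats with all flats of rank $\geq d+1$ replaced by a single top element. Projective general position w.r.t. $\Phi$: with $\mathcal{H}_{\mathbb{P}}=\{h(e)_{\mathbb{P}}\}\cup\{h_\infty\}$ (projective closures), the lattice of all intersections of subsets of $\mathcal{H}_{\mathbb{P}}$ in $\mathbb{P}^d$, ordered by reverse inclusion, is isomorphic to $T_{d+1}(\mathrm{Lat}\,L_0(\Phi))$ via $x\mapsto\{e:h(e)_{\mathbb{P}}\supseteq x\}\cup\{e_0:h_\infty\supseteq x\}$. *)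

theory Defs
  imports "HOL-Analysis.Analysis"
begin

text \<open>An edge e has a chosen orientation gends e = (i,j) and gain ggain e = phi(e;i,j);
  phi(e;j,i) = - ggain e.\<close>

record 'e gain_graph =
  gedges :: "'e set"
  gends  :: "'e \<Rightarrow> nat \<times> nat"
  ggain  :: "'e \<Rightarrow> real"

definition gain_graph :: "nat \<Rightarrow> 'e gain_graph \<Rightarrow> bool" where
  "gain_graph n G \<longleftrightarrow> finite (gedges G) \<and>
     (\<forall>e\<in>gedges G. fst (gends G e) \<in> {1..n} \<and> snd (gends G e) \<in> {1..n}
                    \<and> fst (gends G e) \<noteq> snd (gends G e))"

definition joins :: "'e gain_graph \<Rightarrow> 'e \<Rightarrow> nat \<Rightarrow> nat \<Rightarrow> bool" where
  "joins G e i j \<longleftrightarrow> gends G e = (i, j) \<or> gends G e = (j, i)"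

definition gain :: "'e gain_graph \<Rightarrow> 'e \<Rightarrow> nat \<Rightarrow> nat \<Rightarrow> real" where
  "gain G e i j = (if gends G e = (i, j) then ggain G e
                   else if gends G e = (j, i) then - ggain G e else 0)"

definition circle_in :: "'e gain_graph \<Rightarrow> 'e set \<Rightarrow> nat list \<Rightarrow> 'e list \<Rightarrow> bool" where
  "circle_in G S vs es \<longleftrightarrow> length vs = length es \<and> 2 \<le> length es \<and> distinct vs \<and> distinct es
     \<and> set es \<subseteq> S
     \<and> (\<forall>m<length es. joins G (es ! m) (vs ! m) (vs ! ((m + 1) mod length es)))"

definition circle_gain :: "'e gain_graph \<Rightarrow> nat list \<Rightarrow> 'e list \<Rightarrow> real" where
  "circle_gain G vs es =
     (\<Sum>m<length es. gain G (es ! m) (vs ! m) (vs ! ((m + 1) mod length es)))"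

definition balanced :: "'e gain_graph \<Rightarrow> 'e set \<Rightarrow> bool" where
  "balanced G S \<longleftrightarrow> S \<subseteq> gedges G \<and>
     (\<forall>vs es. circle_in G S vs es \<longrightarrow> circle_gain G vs es = 0)"

definition conn :: "nat set \<Rightarrow> (nat \<times> nat) set \<Rightarrow> nat \<Rightarrow> nat \<Rightarrow> bool" where
  "conn V R i j \<longleftrightarrow> (i, j) \<in> (Restr (R \<union> R\<inverse>) V)\<^sup>*"

definition ncomp :: "nat set \<Rightarrow> (nat \<times> nat) set \<Rightarrow> nat" where
  "ncomp V R = card ((\<lambda>v. {u \<in> V. conn V R v u}) ` V)"

definition ecomp :: "'e gain_graph \<Rightarrow> nat \<Rightarrow> 'e set \<Rightarrow> nat" where
  "ecomp G n S = ncomp {1..n} (gends G ` S)"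

definition balanced_flat :: "'e gain_graph \<Rightarrow> nat \<Rightarrow> 'e set \<Rightarrow> bool" where
  "balanced_flat G n S \<longleftrightarrow> balanced G S \<and>
     (\<forall>e \<in> gedges G - S.
        conn {1..n} (gends G ` S) (fst (gends G e)) (snd (gends G e))
        \<longrightarrow> \<not> balanced G (insert e S))"

definition complete_gg :: "nat \<Rightarrow> 'e gain_graph \<Rightarrow> bool" where
  "complete_gg n G \<longleftrightarrow> (\<forall>i\<in>{1..n}. \<forall>j\<in>{1..n}. i \<noteq> j \<longrightarrow> (\<exists>e\<in>gedges G. joins G e i j))"

definition disconnected_gg :: "nat \<Rightarrow> 'e gain_graph \<Rightarrow> bool" where
  "disconnected_gg n G \<longleftrightarrow> 2 \<le> ecomp G n (gedges G)"

definition connected_gg :: "nat \<Rightarrow> 'e gain_graph \<Rightarrow> bool" where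
  "connected_gg n G \<longleftrightarrow> ecomp G n (gedges G) = 1"

definition separable_gg :: "nat \<Rightarrow> 'e gain_graph \<Rightarrow> bool" where
  "separable_gg n G \<longleftrightarrow> (\<exists>v\<in>{1..n}.
     2 \<le> ncomp ({1..n} - {v})
            (gends G ` {e \<in> gedges G. \<not> (fst (gends G e) = v \<or> snd (gends G e) = v)}))"

definition psi :: "(nat \<Rightarrow> 'a::euclidean_space) \<Rightarrow> nat \<Rightarrow> nat \<Rightarrow> 'a \<Rightarrow> real" where
  "psi Q i j P = (dist P (Q i))\<^sup>2 - (dist P (Q j))\<^sup>2"

definition hyp :: "'e gain_graph \<Rightarrow> (nat \<Rightarrow> 'a::euclidean_space) \<Rightarrow> 'e \<Rightarrow> 'a set" where
  "hyp G Q e = {P. psi Q (fst (gends G e)) (snd (gends G e)) P = ggain G e}"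

definition arr_lattice :: "'e gain_graph \<Rightarrow> (nat \<Rightarrow> 'a::euclidean_space) \<Rightarrow> 'a set set" where
  "arr_lattice G Q = {\<Inter> (hyp G Q ` A) | A. A \<subseteq> gedges G \<and> \<Inter> (hyp G Q ` A) \<noteq> {}}"

definition Eof :: "'e gain_graph \<Rightarrow> (nat \<Rightarrow> 'a::euclidean_space) \<Rightarrow> 'a set \<Rightarrow> 'e set" where
  "Eof G Q s = {e \<in> gedges G. s \<subseteq> hyp G Q e}"

text \<open>General position w.r.t. Phi: s |-> E(s) is a poset isomorphism from L(H) (reverse inclusion)
  onto the balanced flats of rank n - c(S) <= d (inclusion).\<close>

definition general_position :: "'e gain_graph \<Rightarrow> nat \<Rightarrow> (nat \<Rightarrow> 'a::euclidean_space) \<Rightarrow> bool" where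
  "general_position G n Q \<longleftrightarrow>
     bij_betw (Eof G Q) (arr_lattice G Q)
       {S. balanced_flat G n S \<and> n - ecomp G n S \<le> DIM('a)} \<and>
     (\<forall>s\<in>arr_lattice G Q. \<forall>t\<in>arr_lattice G Q. t \<subseteq> s \<longleftrightarrow> Eof G Q s \<subseteq> Eof G Q t)"

definition simple_position :: "nat \<Rightarrow> (nat \<Rightarrow> 'a::euclidean_space) \<Rightarrow> bool" where
  "simple_position n Q \<longleftrightarrow>
     (\<forall>I \<subseteq> {1..n}. card I \<le> DIM('a) + 1 \<longrightarrow> inj_on Q I \<and> \<not> affine_dependent (Q ` I))"

text \<open>The ideal point p_ij is the direction of Q_j - Q_i; the projective span of a set of ideal
  points has projective dimension (linear dimension of the span of the directions) - 1.
  Unordered pairs {i,j} are encoded as (i,j) with i < j.\<close>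

definition ideal_general_position :: "nat \<Rightarrow> (nat \<Rightarrow> 'a::euclidean_space) \<Rightarrow> bool" where
  "ideal_general_position n Q \<longleftrightarrow> inj_on Q {1..n} \<and>
     (\<forall>T. T \<subseteq> {(i, j). i \<in> {1..n} \<and> j \<in> {1..n} \<and> i < j} \<longrightarrow>
        dim ((\<lambda>(i, j). Q j - Q i) ` T) = min (n - ncomp {1..n} T) DIM('a))"

text \<open>P^d is modelled by the linear subspaces of 'a \<times> real (a projective subspace is identified
  with the linear subspace of its homogeneous coordinates; E^d embeds as P |-> [P:1]).
  The projective closure of an affine set A is the projective span of A, i.e. span of the points (P,1).\<close>

definition hP :: "'e gain_graph \<Rightarrow> (nat \<Rightarrow> 'a::euclidean_space) \<Rightarrow> 'e \<Rightarrow> ('a \<times> real) set" where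
  "hP G Q e = span ((\<lambda>P. (P, 1::real)) ` hyp G Q e)"

definition h_inf :: "('a::euclidean_space \<times> real) set" where
  "h_inf = {x. snd x = 0}"

text \<open>Ground set of the complete lift matroid: None plays the role of e_0, Some e of e.\<close>

definition Hfam :: "'e gain_graph \<Rightarrow> (nat \<Rightarrow> 'a::euclidean_space) \<Rightarrow> 'e option \<Rightarrow> ('a \<times> real) set" where
  "Hfam G Q a = (case a of None \<Rightarrow> h_inf | Some e \<Rightarrow> hP G Q e)"

definition lift_ground :: "'e gain_graph \<Rightarrow> 'e option set" where
  "lift_ground G = insert None (Some ` gedges G)"

definition proj_lattice :: "'e gain_graph \<Rightarrow> (nat \<Rightarrow> 'a::euclidean_space) \<Rightarrow> ('a \<times> real) set set" where
  "proj_lattice G Q = {\<Inter> (Hfam G Q ` A) | A. A \<subseteq> lift_ground G}"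

definition Xof :: "'e gain_graph \<Rightarrow> (nat \<Rightarrow> 'a::euclidean_space) \<Rightarrow> ('a \<times> real) set \<Rightarrow> 'e option set" where
  "Xof G Q x = {a \<in> lift_ground G. x \<subseteq> Hfam G Q a}"

definition lift_rank :: "'e gain_graph \<Rightarrow> nat \<Rightarrow> 'e option set \<Rightarrow> nat" where
  "lift_rank G n S = n - ecomp G n {e. Some e \<in> S}
     + (if None \<notin> S \<and> balanced G {e. Some e \<in> S} then 0 else 1)"

definition lift_flat :: "'e gain_graph \<Rightarrow> nat \<Rightarrow> 'e option set \<Rightarrow> bool" where
  "lift_flat G n F \<longleftrightarrow> F \<subseteq> lift_ground G \<and>
     (\<forall>x \<in> lift_ground G - F. lift_rank G n F < lift_rank G n (insert x F))"

text \<open>T_{d+1}(Lat L_0): flats of rank <= d, plus one top element (represented by the ground set,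
  which is the top flat), standing for all flats of rank >= d+1.\<close>

definition trunc_lattice :: "'e gain_graph \<Rightarrow> nat \<Rightarrow> nat \<Rightarrow> 'e option set set" where
  "trunc_lattice G n d = {F. lift_flat G n F \<and> lift_rank G n F \<le> d} \<union> {lift_ground G}"

definition proj_general_position :: "'e gain_graph \<Rightarrow> nat \<Rightarrow> (nat \<Rightarrow> 'a::euclidean_space) \<Rightarrow> bool" where
  "proj_general_position G n Q \<longleftrightarrow>
     bij_betw (Xof G Q) (proj_lattice G Q) (trunc_lattice G n DIM('a)) \<and>
     (\<forall>x\<in>proj_lattice G Q. \<forall>y\<in>proj_lattice G Q. y \<subseteq> x \<longleftrightarrow> Xof G Q x \<subseteq> Xof G Q y)"

definition completely_general_position :: "'e gain_graph \<Rightarrow> nat \<Rightarrow> (nat \<Rightarrow> 'a::euclidean_space) \<Rightarrow> bool" where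
  "completely_general_position G n Q \<longleftrightarrow> ideal_general_position n Q \<and> general_position G n Q"

definition proj_completely_general_position :: "'e gain_graph \<Rightarrow> nat \<Rightarrow> (nat \<Rightarrow> 'a::euclidean_space) \<Rightarrow> bool" where
  "proj_completely_general_position G n Q \<longleftrightarrow> ideal_general_position n Q \<and> proj_general_position G n Q"

end

theory Submission
  imports Defs
begin


lemma conn_refl[simp]: "conn V R i i"
  by (simp add: conn_def)

lemma conn_sym: "conn V R i j \<Longrightarrow> conn V R j i"
proof -
  have s: "sym (Restr (R \<union> R\<inverse>) V)" by (auto simp: sym_def)
  assume "conn V R i j"
  then show ?thesis unfolding conn_def
    by (metis s converse_iff rtrancl_converseI sym_conv_converse_eq)
qed

lemma conn_trans: "conn V R i j \<Longrightarrow> conn V R j k \<Longrightarrow> conn V R i k"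
  unfolding conn_def by (rule rtrancl_trans)

lemma conn_edge: "(a,b) \<in> R \<Longrightarrow> a \<in> V \<Longrightarrow> b \<in> V \<Longrightarrow> conn V R a b"
  unfolding conn_def by auto

lemma conn_edge': "(a,b) \<in> R \<Longrightarrow> a \<in> V \<Longrightarrow> b \<in> V \<Longrightarrow> conn V R b a"
  unfolding conn_def by auto

lemma conn_mono: "R \<subseteq> R' \<Longrightarrow> conn V R i j \<Longrightarrow> conn V R' i j"
  unfolding conn_def by (rule rtrancl_mono[THEN subsetD]) auto

lemma conn_in: "conn V R i j \<Longrightarrow> i \<noteq> j \<Longrightarrow> i \<in> V \<and> j \<in> V"
  unfolding conn_def
  by (induction rule: rtrancl_induct) auto

lemma conn_sub:
  assumes "\<And>a b. (a,b) \<in> R' \<Longrightarrow> a \<in> V \<Longrightarrow> b \<in> V \<Longrightarrow> conn V R a b"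
  shows "conn V R' i j \<Longrightarrow> conn V R i j"
  unfolding conn_def[of V R' i j]
proof (induction rule: rtrancl_induct)
  case base then show ?case by simp
next
  case (step y z)
  then have "conn V R y z" using assms conn_sym by auto
  then show ?case using step conn_trans by blast
qed

lemma conn_eqI:
  assumes "R \<subseteq> R'" "\<And>a b. (a,b) \<in> R' \<Longrightarrow> a \<in> V \<Longrightarrow> b \<in> V \<Longrightarrow> conn V R a b"
  shows "conn V R' = conn V R"
  using conn_sub[OF assms(2)] conn_mono[OF assms(1)] by (intro ext) blast

lemma conn_insert:
  "conn V (insert (a,b) R) i j \<longleftrightarrow> conn V R i j \<or> (a\<in>V \<and> b\<in>V \<and>
     ((conn V R i a \<and> conn V R b j) \<or> (conn V R i b \<and> conn V R a j)))"
  (is "?L \<longleftrightarrow> ?R j")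
proof
  assume ?L
  then show "?R j" unfolding conn_def[of V "insert (a,b) R" i j]
  proof (induction rule: rtrancl_induct)
    case base then show ?case by simp
  next
    case (step y z)
    have yz: "(y,z) \<in> R \<union> R\<inverse> \<and> y \<in> V \<and> z \<in> V \<or> ((y,z) = (a,b) \<or> (y,z) = (b,a)) \<and> a \<in> V \<and> b \<in> V"
      using step(2) by auto
    show ?case
    proof (cases "(y,z) \<in> R \<union> R\<inverse> \<and> y \<in> V \<and> z \<in> V")
      case True
      then have "conn V R y z" unfolding conn_def by auto
      then show ?thesis using step(3) conn_trans by blast
    next
      case False
      then have ab: "((y,z) = (a,b) \<or> (y,z) = (b,a)) \<and> a \<in> V \<and> b \<in> V" using yz by blast
      show ?thesis
      proof (cases "conn V R i y")
        case True
        then show ?thesis using ab by auto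
      next
        case False
        then have "(conn V R i a \<and> conn V R b y) \<or> (conn V R i b \<and> conn V R a y)" using step(3) by auto
        then show ?thesis using ab
          by (metis conn_sym conn_trans prod.inject)
      qed
    qed
  qed
next
  assume "?R j"
  moreover have "a\<in>V \<Longrightarrow> b\<in>V \<Longrightarrow> conn V (insert (a,b) R) a b" by (rule conn_edge) auto
  moreover note conn_mono[of R "insert (a,b) R", OF subset_insertI]
  ultimately show ?L 
    by (smt (verit, ccfv_SIG) conn_sym conn_trans)
qed


definition vcomp :: "nat set \<Rightarrow> (nat \<times> nat) set \<Rightarrow> nat \<Rightarrow> nat set" where
  "vcomp V R v = {u \<in> V. conn V R v u}"

lemma ncomp_comp: "ncomp V R = card (vcomp V R ` V)"
  unfolding ncomp_def vcomp_def by simp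

lemma vcomp_eq: "conn V R v w \<Longrightarrow> vcomp V R v = vcomp V R w"
  unfolding vcomp_def using conn_trans conn_sym by blast

lemma ncomp_le: "finite V \<Longrightarrow> ncomp V R \<le> card V"
  unfolding ncomp_def by (rule card_image_le)

lemma ncomp_cong: "conn V R = conn V R' \<Longrightarrow> ncomp V R = ncomp V R'"
  unfolding ncomp_def by simp

lemma conn_empty: "conn V {} i j \<longleftrightarrow> i = j"
  unfolding conn_def by auto

lemma ncomp_empty: "ncomp V {} = card V"
proof -
  have "(\<lambda>v. {u \<in> V. conn V {} v u}) ` V = (\<lambda>v. {v}) ` V"
    by (auto simp: conn_empty)
  moreover have "card ((\<lambda>v. {v}) ` V) = card V" by (rule card_image) (auto simp: inj_on_def)
  ultimately show ?thesis unfolding ncomp_def by simp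
qed

lemma ncomp_insert_conn: "conn V R a b \<Longrightarrow> ncomp V (insert (a,b) R) = ncomp V R"
  apply (rule ncomp_cong) apply (rule conn_eqI) by (auto intro: conn_edge)

lemma ncomp_insert_nconn:
  assumes "finite V" "a \<in> V" "b \<in> V" "\<not> conn V R a b"
  shows "ncomp V (insert (a,b) R) + 1 = ncomp V R"
proof -
  let ?C = "vcomp V R" and ?C' = "vcomp V (insert (a,b) R)"
  have C': "?C' v = (if v \<in> ?C a \<union> ?C b then ?C a \<union> ?C b else ?C v)" if "v \<in> V" for v
  proof (cases "v \<in> ?C a \<union> ?C b")
    case True
    then have "conn V R v a \<or> conn V R v b" unfolding vcomp_def using conn_sym by blast
    then have "?C' v = ?C a \<union> ?C b"
    proof
      assume va: "conn V R v a"
      show ?thesis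
      proof (rule set_eqI)
        fix u
        have "conn V (insert (a,b) R) v u \<longleftrightarrow> conn V R a u \<or> conn V R b u"
          unfolding conn_insert using va assms(2,3) conn_trans[of V R] conn_sym[of V R] by meson
        then show "u \<in> ?C' v \<longleftrightarrow> u \<in> ?C a \<union> ?C b" unfolding vcomp_def by auto
      qed
    next
      assume vb: "conn V R v b"
      show ?thesis
      proof (rule set_eqI)
        fix u
        have "conn V (insert (a,b) R) v u \<longleftrightarrow> conn V R a u \<or> conn V R b u"
          unfolding conn_insert using vb assms(2,3) conn_trans[of V R] conn_sym[of V R] by meson
        then show "u \<in> ?C' v \<longleftrightarrow> u \<in> ?C a \<union> ?C b" unfolding vcomp_def by auto
      qed
    qed
    then show ?thesis using True by simp
  next
    case False
    then have "\<not> conn V R a v" "\<not> conn V R b v" using that unfolding vcomp_def by auto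
    then have "\<not> conn V R v a" "\<not> conn V R v b" using conn_sym by blast+
    then show ?thesis using False unfolding vcomp_def conn_insert by auto
  qed
  have img: "?C' ` V = insert (?C a \<union> ?C b) (?C ` V - {?C a, ?C b})"
  proof (rule set_eqI, rule iffI)
    fix X assume "X \<in> ?C' ` V"
    then obtain v where v: "v \<in> V" "X = ?C' v" by auto
    then show "X \<in> insert (?C a \<union> ?C b) (?C ` V - {?C a, ?C b})"
      using C'[OF v(1)] unfolding vcomp_def by auto
  next
    fix X assume X: "X \<in> insert (?C a \<union> ?C b) (?C ` V - {?C a, ?C b})"
    show "X \<in> ?C' ` V"
    proof (cases "X = ?C a \<union> ?C b")
      case True
      have "a \<in> ?C a" using assms unfolding vcomp_def by auto
      then show ?thesis using True C'[OF assms(2)] assms(2) by (metis Un_iff image_eqI)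
    next
      case False
      then obtain v where v: "v \<in> V" "X = ?C v" "?C v \<noteq> ?C a" "?C v \<noteq> ?C b" using X by auto
      have "v \<notin> ?C a \<union> ?C b" using v vcomp_eq unfolding vcomp_def by blast
      then show ?thesis using C'[OF v(1)] v by auto
    qed
  qed
  have fin: "finite (?C ` V)" using assms(1) by (rule finite_imageI)
  have "b \<in> ?C b" using assms(3) unfolding vcomp_def by simp
  moreover have "b \<notin> ?C a" using assms(4) unfolding vcomp_def by simp
  ultimately have ne: "?C a \<noteq> ?C b" by blast
  have notin: "?C a \<union> ?C b \<notin> ?C ` V - {?C a, ?C b}"
  proof
    assume "?C a \<union> ?C b \<in> ?C ` V - {?C a, ?C b}"
    then obtain v where v: "v \<in> V" "?C v = ?C a \<union> ?C b" "?C v \<noteq> ?C a" by auto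
    have "a \<in> ?C a" using assms(2) unfolding vcomp_def by simp
    then have "a \<in> ?C v" using v(2) by blast
    then have "conn V R v a" unfolding vcomp_def by simp
    then show False using vcomp_eq v by blast
  qed
  have f2: "finite (?C ` V - {?C a, ?C b})" using fin by (rule finite_Diff)
  have "card (?C' ` V) = Suc (card (?C ` V - {?C a, ?C b}))"
    unfolding img by (rule card_insert_disjoint[OF f2 notin])
  moreover have "card (?C ` V - {?C a, ?C b}) = card (?C ` V) - card {?C a, ?C b}"
    by (rule card_Diff_subset) (simp_all add: assms(2,3))
  moreover have "card {?C a, ?C b} = 2" using ne by simp
  moreover have "card {?C a, ?C b} \<le> card (?C ` V)"
    by (rule card_mono[OF fin]) (simp add: assms(2,3))
  ultimately show ?thesis unfolding ncomp_comp by linarith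
qed


definition dirv :: "'e gain_graph \<Rightarrow> (nat \<Rightarrow> 'a::euclidean_space) \<Rightarrow> 'e \<Rightarrow> 'a" where
  "dirv G Q e = Q (snd (gends G e)) - Q (fst (gends G e))"

definition kap :: "'e gain_graph \<Rightarrow> (nat \<Rightarrow> 'a::euclidean_space) \<Rightarrow> 'e \<Rightarrow> real" where
  "kap G Q e = (ggain G e - (norm (Q (fst (gends G e))))\<^sup>2 + (norm (Q (snd (gends G e))))\<^sup>2) / 2"

lemma psi_eq: "psi Q i j P = 2 * ((Q j - Q i) \<bullet> P) + (norm (Q i))\<^sup>2 - (norm (Q j))\<^sup>2"
  unfolding psi_def dist_norm power2_norm_eq_inner
  by (simp add: inner_diff_left inner_diff_right inner_commute algebra_simps)

lemma hyp_eq: "hyp G Q e = {P. dirv G Q e \<bullet> P = kap G Q e}"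
  unfolding hyp_def dirv_def kap_def psi_eq by (auto simp: algebra_simps)

lemma gg_ends:
  assumes "gain_graph n G" "e \<in> gedges G"
  shows "fst (gends G e) \<in> {1..n}" "snd (gends G e) \<in> {1..n}" "fst (gends G e) \<noteq> snd (gends G e)"
  using assms unfolding gain_graph_def by auto

lemma gg_finite: "gain_graph n G \<Longrightarrow> finite (gedges G)"
  unfolding gain_graph_def by auto

lemma conn_ends:
  assumes "gain_graph n G" "e \<in> S" "S \<subseteq> gedges G"
  shows "conn {1..n} (gends G ` S) (fst (gends G e)) (snd (gends G e))"
  using gg_ends[OF assms(1)] assms(2,3) by (intro conn_edge) auto

lemma conn_dir:
  assumes "conn {1..n} (gends G ` S) i j"
  shows "Q j - Q i \<in> span (dirv G Q ` S)"
  using assms unfolding conn_def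
proof (induction rule: rtrancl_induct)
  case base then show ?case by (simp add: span_zero)
next
  case (step y z)
  then obtain e where e: "e \<in> S" "gends G e = (y,z) \<or> gends G e = (z,y)" by auto
  have "Q z - Q y \<in> span (dirv G Q ` S)"
    using e span_base[of "dirv G Q e" "dirv G Q ` S"] span_neg[of "dirv G Q e" "dirv G Q ` S"]
    unfolding dirv_def by auto
  then have "(Q y - Q i) + (Q z - Q y) \<in> span (dirv G Q ` S)" using step span_add by blast
  then show ?case by simp
qed

lemma image_insert_gends: "gends G ` insert e S = insert (fst (gends G e), snd (gends G e)) (gends G ` S)"
  by simp

lemma ecomp_insert_conn:
  assumes "conn {1..n} (gends G ` S) (fst (gends G e)) (snd (gends G e))"
  shows "ecomp G n (insert e S) = ecomp G n S"
  unfolding ecomp_def image_insert_gends using ncomp_insert_conn[OF assms] .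

lemma ecomp_insert_nconn:
  assumes "gain_graph n G" "e \<in> gedges G" "\<not> conn {1..n} (gends G ` S) (fst (gends G e)) (snd (gends G e))"
  shows "ecomp G n (insert e S) + 1 = ecomp G n S"
  unfolding ecomp_def image_insert_gends using ncomp_insert_nconn[OF _ _ _ assms(3)] gg_ends[OF assms(1,2)] by simp

lemma ecomp_le: "ecomp G n S \<le> n"
  unfolding ecomp_def using ncomp_le[of "{1..n}"] by simp

lemma ecomp_empty: "ecomp G n {} = n"
  unfolding ecomp_def by (simp add: ncomp_empty)

lemma conn_insert_same:
  assumes "conn V R a b"
  shows "conn V (insert (a,b) R) = conn V R"
  by (rule conn_eqI) (use assms in \<open>auto intro: conn_edge\<close>)

lemma conn_insert_cong:
  assumes "conn V R = conn V R'"
  shows "conn V (insert p R) = conn V (insert p R')"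
proof -
  obtain a b where p: "p = (a,b)" by force
  show ?thesis unfolding p by (intro ext) (simp add: conn_insert assms)
qed

lemma balanced_subset: "balanced G S \<Longrightarrow> T \<subseteq> S \<Longrightarrow> balanced G T"
  unfolding balanced_def circle_in_def by blast

lemma balanced_empty: "balanced G {}"
  unfolding balanced_def circle_in_def by auto

lemma joins_conn:
  assumes "gain_graph n G" "e \<in> S" "S \<subseteq> gedges G" "joins G e x y"
  shows "conn {1..n} (gends G ` S) x y"
  using assms(4) unfolding joins_def
proof
  assume "gends G e = (x, y)" then show ?thesis using conn_ends[OF assms(1-3)] by simp
next
  assume "gends G e = (y, x)" then show ?thesis using conn_sym[OF conn_ends[OF assms(1-3)]] by simp
qed

lemma circle_walk:
  assumes gg: "gain_graph n G" and c: "circle_in G (insert e B) vs es" and B: "B \<subseteq> gedges G"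
    and m: "m < length es" "es ! m = e"
  shows "conn {1..n} (gends G ` B) (vs ! ((m + 1) mod length es)) (vs ! m)"
proof -
  let ?L = "length es"
  have L: "2 \<le> ?L" "distinct es" "set es \<subseteq> insert e B"
    "\<And>k. k < ?L \<Longrightarrow> joins G (es ! k) (vs ! k) (vs ! ((k + 1) mod ?L))"
    using c unfolding circle_in_def by auto
  have walk: "conn {1..n} (gends G ` B) (vs ! ((m + 1) mod ?L)) (vs ! ((m + 1 + k) mod ?L))"
    if "k \<le> ?L - 1" for k
    using that
  proof (induction k)
    case 0 then show ?case by simp
  next
    case (Suc k)
    let ?p = "(m + 1 + k) mod ?L"
    have L0: "0 < ?L" using L(1) by linarith
    have pl: "?p < ?L" using L0 by (rule mod_less_divisor)
    have pm: "?p \<noteq> m"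
    proof
      assume pm: "?p = m"
      have k1: "k + 1 < ?L" using Suc.prems L(1) by simp
      show False
      proof (cases "m + 1 + k < ?L")
        case True then show False using pm by simp
      next
        case False
        then have "(m + 1 + k) mod ?L = (m + 1 + k - ?L) mod ?L" by (simp add: mod_if)
        also have "\<dots> = m + 1 + k - ?L" using m k1 by simp
        finally show False using pm k1 by simp
      qed
    qed
    have "es ! ?p \<noteq> e" using pm nth_eq_iff_index_eq[OF L(2) pl m(1)] m(2) by simp
    then have eB: "es ! ?p \<in> B" using L(3) pl nth_mem by blast
    have st: "conn {1..n} (gends G ` B) (vs ! ?p) (vs ! ((?p + 1) mod ?L))"
      by (rule joins_conn[OF gg eB B L(4)[OF pl]])
    have eq: "(?p + 1) mod ?L = (m + 1 + Suc k) mod ?L" by (simp add: mod_Suc_eq)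
    have IH: "conn {1..n} (gends G ` B) (vs ! ((m + 1) mod ?L)) (vs ! ?p)"
      using Suc.IH Suc.prems by simp
    show ?case using conn_trans[OF IH st] unfolding eq .
  qed
  have "m + 1 + (?L - 1) = m + ?L" using L(1) by simp
  then have "(m + 1 + (?L - 1)) mod ?L = m" using m by simp
  then show ?thesis using walk[of "?L - 1"] by simp
qed

lemma bridge_balanced:
  assumes gg: "gain_graph n G" and bal: "balanced G B" and e: "e \<in> gedges G"
    and nc: "\<not> conn {1..n} (gends G ` B) (fst (gends G e)) (snd (gends G e))"
  shows "balanced G (insert e B)"
  unfolding balanced_def
proof (intro conjI allI impI)
  show "insert e B \<subseteq> gedges G" using bal e unfolding balanced_def by auto
next
  fix vs es assume c: "circle_in G (insert e B) vs es"
  have B: "B \<subseteq> gedges G" using bal unfolding balanced_def by auto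
  show "circle_gain G vs es = 0"
  proof (cases "e \<in> set es")
    case False
    then have "circle_in G B vs es" using c unfolding circle_in_def by auto
    then show ?thesis using bal unfolding balanced_def by auto
  next
    case True
    then obtain m where m: "m < length es" "es ! m = e" by (metis in_set_conv_nth)
    have w: "conn {1..n} (gends G ` B) (vs ! ((m + 1) mod length es)) (vs ! m)"
      by (rule circle_walk[OF gg c B m])
    have "joins G e (vs ! m) (vs ! ((m + 1) mod length es))"
      using c m unfolding circle_in_def by auto
    then have "gends G e = (vs ! m, vs ! ((m + 1) mod length es)) \<or> gends G e = (vs ! ((m + 1) mod length es), vs ! m)"
      unfolding joins_def .
    then have "conn {1..n} (gends G ` B) (fst (gends G e)) (snd (gends G e))"
      using w conn_sym[OF w] by (elim disjE) simp_all
    then show ?thesis using nc by blast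
  qed
qed

lemma max_extension:
  assumes gg: "gain_graph n G" and bal: "balanced G B"
  shows "\<exists>F. B \<subseteq> F \<and> balanced_flat G n F \<and> conn {1..n} (gends G ` F) = conn {1..n} (gends G ` B)"
proof -
  let ?E = "gedges G"
  let ?FF = "{X. B \<subseteq> X \<and> balanced G X \<and> conn {1..n} (gends G ` X) = conn {1..n} (gends G ` B)}"
  have sub: "?FF \<subseteq> Pow ?E" unfolding balanced_def by blast
  have fin: "finite ?FF" using gg_finite[OF gg] sub by (meson finite_Pow_iff finite_subset)
  have ne: "B \<in> ?FF" using bal by blast
  define mx where "mx = Max (card ` ?FF)"
  have "mx \<in> card ` ?FF" unfolding mx_def using fin ne by (intro Max_in) auto
  then obtain F where F: "F \<in> ?FF" "card F = mx" by auto
  have maxF: "card X \<le> card F" if "X \<in> ?FF" for X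
    unfolding F(2) mx_def using fin that by (intro Max_ge) auto
  have FE: "F \<subseteq> ?E" using F(1) unfolding balanced_def by auto
  have "balanced_flat G n F"
    unfolding balanced_flat_def
  proof (intro conjI ballI impI)
    show "balanced G F" using F by simp
  next
    fix e assume e: "e \<in> ?E - F" and c: "conn {1..n} (gends G ` F) (fst (gends G e)) (snd (gends G e))"
    show "\<not> balanced G (insert e F)"
    proof
      assume b: "balanced G (insert e F)"
      have "conn {1..n} (gends G ` insert e F) = conn {1..n} (gends G ` F)"
        unfolding image_insert_gends by (rule conn_insert_same[OF c])
      moreover have "B \<subseteq> insert e F" using F(1) by blast
      moreover have "conn {1..n} (gends G ` F) = conn {1..n} (gends G ` B)" using F(1) by blast
      ultimately have "insert e F \<in> ?FF" using b by simp
      then have "card (insert e F) \<le> card F" by (rule maxF)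
      moreover have "finite F" using FE gg_finite[OF gg] finite_subset by blast
      ultimately show False using e by simp
    qed
  qed
  then show ?thesis using F(1) by auto
qed

lemma spanning_balanced:
  assumes gg: "gain_graph n G" and A: "A \<subseteq> gedges G"
  shows "\<exists>B \<subseteq> A. balanced G B \<and> conn {1..n} (gends G ` B) = conn {1..n} (gends G ` A)"
proof -
  have "finite A" using A gg_finite[OF gg] finite_subset by blast
  then show ?thesis using A
  proof (induction A rule: finite_induct)
    case empty then show ?case using balanced_empty by blast
  next
    case (insert e A)
    then obtain B where B: "B \<subseteq> A" "balanced G B" "conn {1..n} (gends G ` B) = conn {1..n} (gends G ` A)" by auto
    have e: "e \<in> gedges G" using insert by auto
    show ?case
    proof (cases "conn {1..n} (gends G ` B) (fst (gends G e)) (snd (gends G e))")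
      case True
      have "conn {1..n} (gends G ` insert e A) = conn {1..n} (insert (fst (gends G e), snd (gends G e)) (gends G ` B))"
        unfolding image_insert_gends by (rule conn_insert_cong) (use B in simp)
      also have "\<dots> = conn {1..n} (gends G ` B)" by (rule conn_insert_same[OF True])
      finally have "conn {1..n} (gends G ` B) = conn {1..n} (gends G ` insert e A)" by (rule sym)
      moreover have "B \<subseteq> insert e A" using B(1) by blast
      ultimately show ?thesis using B(2) by blast
    next
      case False
      have "balanced G (insert e B)" by (rule bridge_balanced[OF gg B(2) e False])
      moreover have "conn {1..n} (gends G ` insert e B) = conn {1..n} (gends G ` insert e A)"
        unfolding image_insert_gends by (rule conn_insert_cong) (use B in simp)
      moreover have "insert e B \<subseteq> insert e A" using B(1) by blast
      ultimately show ?thesis by blast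
    qed
  qed
qed


lemma span_const:
  assumes v: "v \<in> span (dirv G Q ` B)" and P: "\<forall>f\<in>B. P \<in> hyp G Q f" and P': "\<forall>f\<in>B. P' \<in> hyp G Q f"
  shows "v \<bullet> P = v \<bullet> P'"
proof -
  have sub: "subspace {v::'a. v \<bullet> P = v \<bullet> P'}"
    unfolding subspace_def by (simp add: inner_add_left)
  have "\<And>x. x \<in> dirv G Q ` B \<Longrightarrow> x \<in> {v::'a. v \<bullet> P = v \<bullet> P'}"
    using P P' unfolding hyp_eq by auto
  then have "v \<in> {v::'a. v \<bullet> P = v \<bullet> P'}" using span_induct[OF v sub] by blast
  then show ?thesis by simp
qed

lemma arr_nonempty: "s \<in> arr_lattice G Q \<Longrightarrow> s \<noteq> {}"
  unfolding arr_lattice_def by auto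

lemma gp_surj:
  assumes "general_position G n (Q::nat \<Rightarrow> 'a::euclidean_space)" "balanced_flat G n F" "n - ecomp G n F \<le> DIM('a)"
  shows "\<exists>s\<in>arr_lattice G Q. Eof G Q s = F"
proof -
  have "F \<in> Eof G Q ` arr_lattice G Q"
    using assms unfolding general_position_def bij_betw_def by auto
  then show ?thesis by auto
qed

lemma dir_not_in_span:
  fixes Q :: "nat \<Rightarrow> 'a::euclidean_space"
  assumes gg: "gain_graph n G" and gp: "general_position G n Q" and bal: "balanced G B"
    and e: "e \<in> gedges G" and nc: "\<not> conn {1..n} (gends G ` B) (fst (gends G e)) (snd (gends G e))"
    and rk: "n - ecomp G n B < DIM('a)"
  shows "dirv G Q e \<notin> span (dirv G Q ` B)"
proof
  assume sp: "dirv G Q e \<in> span (dirv G Q ` B)"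
  obtain F1 where F1: "B \<subseteq> F1" "balanced_flat G n F1" "conn {1..n} (gends G ` F1) = conn {1..n} (gends G ` B)"
    using max_extension[OF gg bal] by blast
  have bal2: "balanced G (insert e B)" by (rule bridge_balanced[OF gg bal e nc])
  obtain F2 where F2: "insert e B \<subseteq> F2" "balanced_flat G n F2"
    "conn {1..n} (gends G ` F2) = conn {1..n} (gends G ` insert e B)"
    using max_extension[OF gg bal2] by blast
  have c1: "ecomp G n F1 = ecomp G n B" unfolding ecomp_def by (rule ncomp_cong[OF F1(3)])
  have c2: "ecomp G n F2 = ecomp G n (insert e B)" unfolding ecomp_def by (rule ncomp_cong[OF F2(3)])
  have c3: "ecomp G n (insert e B) + 1 = ecomp G n B" by (rule ecomp_insert_nconn[OF gg e nc])
  have le: "ecomp G n B \<le> n" by (rule ecomp_le)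
  obtain s1 where s1: "s1 \<in> arr_lattice G Q" "Eof G Q s1 = F1"
    using gp_surj[OF gp F1(2)] c1 rk by auto
  have "n - ecomp G n F2 \<le> DIM('a)" using c2 c3 rk le by arith
  then obtain s2 where s2: "s2 \<in> arr_lattice G Q" "Eof G Q s2 = F2"
    using gp_surj[OF gp F2(2)] by blast
  obtain P0 where P0: "P0 \<in> s2" using arr_nonempty[OF s2(1)] by blast
  have P0h: "P0 \<in> hyp G Q f" if "f \<in> insert e B" for f
    using that F2(1) s2(2) P0 unfolding Eof_def by blast
  have "s1 \<subseteq> hyp G Q e"
  proof
    fix P assume P: "P \<in> s1"
    have "\<forall>f\<in>B. P \<in> hyp G Q f" using P F1(1) s1(2) unfolding Eof_def by blast
    then have "dirv G Q e \<bullet> P = dirv G Q e \<bullet> P0" using span_const[OF sp] P0h by blast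
    moreover have "dirv G Q e \<bullet> P0 = kap G Q e" using P0h[of e] unfolding hyp_eq by simp
    ultimately show "P \<in> hyp G Q e" unfolding hyp_eq by simp
  qed
  then have "e \<in> F1" using s1(2) e unfolding Eof_def by blast
  moreover have "F1 \<subseteq> gedges G" using F1(2) unfolding balanced_flat_def balanced_def by blast
  ultimately have "conn {1..n} (gends G ` F1) (fst (gends G e)) (snd (gends G e))"
    by (rule conn_ends[OF gg])
  then show False using nc F1(3) by simp
qed

lemma dim_balanced:
  fixes Q :: "nat \<Rightarrow> 'a::euclidean_space"
  assumes gg: "gain_graph n G" and gp: "general_position G n Q" and bal: "balanced G B"
  shows "dim (dirv G Q ` B) = min (n - ecomp G n B) DIM('a)"
proof -
  have BE: "B \<subseteq> gedges G" using bal unfolding balanced_def by blast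
  then have "finite B" using gg_finite[OF gg] finite_subset by blast
  then show ?thesis using bal BE
  proof (induction B rule: finite_induct)
    case empty then show ?case by (simp add: ecomp_empty)
  next
    case (insert e B)
    have balB: "balanced G B" using insert.prems(1) balanced_subset by blast
    have e: "e \<in> gedges G" using insert.prems(2) by blast
    have IH: "dim (dirv G Q ` B) = min (n - ecomp G n B) DIM('a)" using insert.IH balB insert.prems(2) by blast
    have di: "dim (dirv G Q ` insert e B) = (if dirv G Q e \<in> span (dirv G Q ` B) then dim (dirv G Q ` B) else dim (dirv G Q ` B) + 1)"
      by (simp add: dim_insert)
    show ?case
    proof (cases "conn {1..n} (gends G ` B) (fst (gends G e)) (snd (gends G e))")
      case True
      have "dirv G Q e \<in> span (dirv G Q ` B)" using conn_dir[OF True] unfolding dirv_def .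
      then show ?thesis using di IH ecomp_insert_conn[OF True] by simp
    next
      case False
      have c3: "ecomp G n (insert e B) + 1 = ecomp G n B" by (rule ecomp_insert_nconn[OF gg e False])
      have le: "ecomp G n B \<le> n" by (rule ecomp_le)
      show ?thesis
      proof (cases "n - ecomp G n B < DIM('a)")
        case True
        have "dirv G Q e \<notin> span (dirv G Q ` B)" by (rule dir_not_in_span[OF gg gp balB e False True])
        then show ?thesis using di IH c3 le True by simp
      next
        case False
        have "dim (dirv G Q ` insert e B) \<le> DIM('a)" by (rule dim_subset_UNIV)
        moreover have "dim (dirv G Q ` B) = DIM('a)" using IH False by simp
        ultimately show ?thesis using di c3 le False by (simp split: if_splits)
      qed
    qed
  qed
qed

lemma dim_any:
  fixes Q :: "nat \<Rightarrow> 'a::euclidean_space"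
  assumes gg: "gain_graph n G" and gp: "general_position G n Q" and A: "A \<subseteq> gedges G"
  shows "dim (dirv G Q ` A) = min (n - ecomp G n A) DIM('a)"
proof -
  obtain B where B: "B \<subseteq> A" "balanced G B" "conn {1..n} (gends G ` B) = conn {1..n} (gends G ` A)"
    using spanning_balanced[OF gg A] by blast
  have "ecomp G n B = ecomp G n A" unfolding ecomp_def by (rule ncomp_cong[OF B(3)])
  moreover have "span (dirv G Q ` A) = span (dirv G Q ` B)"
  proof (rule span_eq[THEN iffD2], rule conjI)
    show "dirv G Q ` B \<subseteq> span (dirv G Q ` A)" using B(1) span_superset by blast
    show "dirv G Q ` A \<subseteq> span (dirv G Q ` B)"
    proof
      fix x assume "x \<in> dirv G Q ` A"
      then obtain f where f: "f \<in> A" "x = dirv G Q f" by blast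
      have "conn {1..n} (gends G ` A) (fst (gends G f)) (snd (gends G f))"
        by (rule conn_ends[OF gg f(1) A])
      then have "conn {1..n} (gends G ` B) (fst (gends G f)) (snd (gends G f))" using B(3) by simp
      from conn_dir[OF this] show "x \<in> span (dirv G Q ` B)" using f unfolding dirv_def by simp
    qed
  qed
  then have "dim (dirv G Q ` A) = dim (dirv G Q ` B)" by (metis dim_span)
  ultimately show ?thesis using dim_balanced[OF gg gp B(2)] by simp
qed

lemma dir_nonzero:
  fixes Q :: "nat \<Rightarrow> 'a::euclidean_space"
  assumes gg: "gain_graph n G" and gp: "general_position G n Q" and e: "e \<in> gedges G"
  shows "dirv G Q e \<noteq> 0"
proof
  assume z: "dirv G Q e = 0"
  have nc: "\<not> conn {1..n} (gends G ` {}) (fst (gends G e)) (snd (gends G e))"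
    using gg_ends[OF gg e] by (simp add: conn_empty)
  have c: "ecomp G n {e} + 1 = n" using ecomp_insert_nconn[OF gg e nc] by (simp add: ecomp_empty)
  have "dim (dirv G Q ` {e}) = min (n - ecomp G n {e}) DIM('a)"
    by (rule dim_any[OF gg gp]) (use e in simp)
  moreover have "dim (dirv G Q ` {e}) = 0" using z by (simp add: dim_insert span_zero)
  ultimately show False using c DIM_positive[where 'a='a] by simp
qed


definition Lam :: "'e gain_graph \<Rightarrow> (nat \<Rightarrow> 'a::euclidean_space) \<Rightarrow> 'e set \<Rightarrow> ('a \<times> real) set" where
  "Lam G Q B = {p. \<forall>e\<in>B. dirv G Q e \<bullet> fst p = kap G Q e * snd p}"

definition Om :: "'e gain_graph \<Rightarrow> (nat \<Rightarrow> 'a::euclidean_space) \<Rightarrow> 'e set \<Rightarrow> ('a \<times> real) set" where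
  "Om G Q B = {p. snd p = 0 \<and> (\<forall>e\<in>B. dirv G Q e \<bullet> fst p = 0)}"

lemma hP_eq:
  assumes nz: "dirv G Q e \<noteq> 0"
  shows "hP G Q e = Lam G Q {e}"
proof
  have sub: "subspace (Lam G Q {e})"
    unfolding subspace_def Lam_def by (auto simp: inner_add_right algebra_simps)
  show "hP G Q e \<subseteq> Lam G Q {e}"
    unfolding hP_def by (rule span_minimal[OF _ sub]) (auto simp: Lam_def hyp_eq)
next
  show "Lam G Q {e} \<subseteq> hP G Q e"
  proof
    fix p assume p: "p \<in> Lam G Q {e}"
    obtain x t where xt: "p = (x, t)" by force
    have eq: "dirv G Q e \<bullet> x = kap G Q e * t" using p xt unfolding Lam_def by simp
    let ?S = "(\<lambda>P. (P, 1::real)) ` hyp G Q e"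
    show "p \<in> hP G Q e"
    proof (cases "t = 0")
      case False
      have "x /\<^sub>R t \<in> hyp G Q e" using eq False unfolding hyp_eq by (simp add: inner_scaleR_right field_simps)
      then have "(x /\<^sub>R t, 1) \<in> span ?S" by (intro span_base) blast
      then have "t *\<^sub>R (x /\<^sub>R t, 1) \<in> span ?S" by (rule span_scale)
      then show ?thesis using False xt unfolding hP_def by simp
    next
      case True
      define P0 where "P0 = (kap G Q e / (dirv G Q e \<bullet> dirv G Q e)) *\<^sub>R dirv G Q e"
      have P0: "P0 \<in> hyp G Q e" using nz unfolding hyp_eq P0_def by simp
      have P1: "P0 + x \<in> hyp G Q e" using P0 eq True unfolding hyp_eq by (simp add: inner_add_right)
      have "(P0 + x, 1) - (P0, 1) \<in> span ?S"
        by (intro span_diff span_base) (use P0 P1 in blast)+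
      then show ?thesis using True xt unfolding hP_def by simp
    qed
  qed
qed

lemma Inter_Hfam:
  assumes nz: "\<forall>e\<in>gedges G. dirv G Q e \<noteq> 0" and A: "A \<subseteq> lift_ground G"
  shows "\<Inter> (Hfam G Q ` A) = (if None \<in> A then Om G Q {e. Some e \<in> A} else Lam G Q {e. Some e \<in> A})"
proof -
  have H: "Hfam G Q (Some e) = Lam G Q {e}" if "Some e \<in> A" for e
  proof -
    have "e \<in> gedges G" using that A unfolding lift_ground_def by auto
    then have "dirv G Q e \<noteq> 0" using nz by blast
    then show ?thesis unfolding Hfam_def using hP_eq[of G Q e] by simp
  qed
  have "p \<in> \<Inter> (Hfam G Q ` A) \<longleftrightarrow> (None \<in> A \<longrightarrow> snd p = 0) \<and> (\<forall>e. Some e \<in> A \<longrightarrow> p \<in> Lam G Q {e})" for p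
  proof
    assume "p \<in> \<Inter> (Hfam G Q ` A)"
    then show "(None \<in> A \<longrightarrow> snd p = 0) \<and> (\<forall>e. Some e \<in> A \<longrightarrow> p \<in> Lam G Q {e})"
      using H by (force simp: Hfam_def h_inf_def)
  next
    assume r: "(None \<in> A \<longrightarrow> snd p = 0) \<and> (\<forall>e. Some e \<in> A \<longrightarrow> p \<in> Lam G Q {e})"
    show "p \<in> \<Inter> (Hfam G Q ` A)"
    proof
      fix a assume a: "a \<in> A"
      show "p \<in> Hfam G Q a"
      proof (cases a)
        case None then show ?thesis using a r by (simp add: Hfam_def h_inf_def)
      next
        case (Some e) then show ?thesis using a r H by simp
      qed
    qed
  qed
  then have key: "\<Inter> (Hfam G Q ` A) = {p. (None \<in> A \<longrightarrow> snd p = 0) \<and> (\<forall>e. Some e \<in> A \<longrightarrow> p \<in> Lam G Q {e})}"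
    by blast
  show ?thesis
  proof (cases "None \<in> A")
    case True
    show ?thesis unfolding key using True by (auto simp: Om_def Lam_def)
  next
    case False
    show ?thesis unfolding key using False by (auto simp: Om_def Lam_def)
  qed
qed

lemma alpha_eq: "\<Inter> (hyp G Q ` B) = {P. \<forall>e\<in>B. dirv G Q e \<bullet> P = kap G Q e}"
  unfolding hyp_eq by auto

lemma Lam_sub:
  assumes ne: "\<Inter> (hyp G Q ` B) \<noteq> {}"
  shows "Lam G Q B \<subseteq> Lam G Q {e} \<longleftrightarrow> \<Inter> (hyp G Q ` B) \<subseteq> hyp G Q e"
proof
  assume L: "Lam G Q B \<subseteq> Lam G Q {e}"
  show "\<Inter> (hyp G Q ` B) \<subseteq> hyp G Q e"
  proof
    fix P assume "P \<in> \<Inter> (hyp G Q ` B)"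
    then have "(P, 1) \<in> Lam G Q B" unfolding alpha_eq Lam_def by simp
    then have "(P, 1) \<in> Lam G Q {e}" using L by blast
    then show "P \<in> hyp G Q e" unfolding Lam_def hyp_eq by simp
  qed
next
  assume S: "\<Inter> (hyp G Q ` B) \<subseteq> hyp G Q e"
  obtain P0 where P0: "P0 \<in> \<Inter> (hyp G Q ` B)" using ne by blast
  show "Lam G Q B \<subseteq> Lam G Q {e}"
  proof
    fix p assume p: "p \<in> Lam G Q B"
    obtain x t where xt: "p = (x, t)" by force
    show "p \<in> Lam G Q {e}"
    proof (cases "t = 0")
      case False
      have "x /\<^sub>R t \<in> \<Inter> (hyp G Q ` B)" using p xt False unfolding alpha_eq Lam_def
        by (auto simp: inner_scaleR_right field_simps)
      then have "x /\<^sub>R t \<in> hyp G Q e" using S by blast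
      then show ?thesis using xt False unfolding hyp_eq Lam_def by (simp add: inner_scaleR_right field_simps)
    next
      case True
      have "P0 + x \<in> \<Inter> (hyp G Q ` B)" using p xt True P0 unfolding alpha_eq Lam_def
        by (auto simp: inner_add_right)
      then have "P0 + x \<in> hyp G Q e" using S by blast
      moreover have "P0 \<in> hyp G Q e" using S P0 by blast
      ultimately show ?thesis using xt True unfolding hyp_eq Lam_def by (simp add: inner_add_right)
    qed
  qed
qed

lemma Lam_not_inf:
  assumes ne: "\<Inter> (hyp G Q ` B) \<noteq> {}"
  shows "\<not> Lam G Q B \<subseteq> h_inf"
proof
  assume L: "Lam G Q B \<subseteq> h_inf"
  obtain P0 where P0: "P0 \<in> \<Inter> (hyp G Q ` B)" using ne by blast
  then have "(P0, 1) \<in> Lam G Q B" unfolding alpha_eq Lam_def by simp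
  then show False using L unfolding h_inf_def by auto
qed

lemma Lam_empty:
  assumes e: "\<Inter> (hyp G Q ` B) = {}"
  shows "Lam G Q B = Om G Q B"
proof
  show "Lam G Q B \<subseteq> Om G Q B"
  proof
    fix p assume p: "p \<in> Lam G Q B"
    obtain x t where xt: "p = (x, t)" by force
    have "t = 0"
    proof (rule ccontr)
      assume "t \<noteq> 0"
      then have "x /\<^sub>R t \<in> \<Inter> (hyp G Q ` B)" using p xt unfolding alpha_eq Lam_def
        by (auto simp: inner_scaleR_right field_simps)
      then show False using e by blast
    qed
    then show "p \<in> Om G Q B" using p xt unfolding Lam_def Om_def by simp
  qed
  show "Om G Q B \<subseteq> Lam G Q B" unfolding Lam_def Om_def by auto
qed

lemma Om_inf: "Om G Q B \<subseteq> h_inf"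
  unfolding Om_def h_inf_def by auto

lemma span_orth:
  fixes x :: "'a::euclidean_space"
  assumes v: "v \<in> span S" and x: "\<forall>s\<in>S. s \<bullet> x = 0"
  shows "v \<bullet> x = 0"
proof -
  have sub: "subspace {v::'a::euclidean_space. v \<bullet> x = 0}"
    unfolding subspace_def by (simp add: inner_add_left)
  have "v \<in> {v. v \<bullet> x = 0}" using span_induct[OF v sub] x by blast
  then show ?thesis by simp
qed

lemma Om_sub:
  "Om G Q B \<subseteq> Lam G Q {e} \<longleftrightarrow> dirv G Q e \<in> span (dirv G Q ` B)"
proof
  assume sp: "dirv G Q e \<in> span (dirv G Q ` B)"
  show "Om G Q B \<subseteq> Lam G Q {e}"
  proof
    fix p assume p: "p \<in> Om G Q B"
    then have "\<forall>s\<in>dirv G Q ` B. s \<bullet> fst p = 0" unfolding Om_def by auto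
    then have "dirv G Q e \<bullet> fst p = 0" by (rule span_orth[OF sp])
    then show "p \<in> Lam G Q {e}" using p unfolding Om_def Lam_def by simp
  qed
next
  assume L: "Om G Q B \<subseteq> Lam G Q {e}"
  show "dirv G Q e \<in> span (dirv G Q ` B)"
  proof (rule ccontr)
    assume nsp: "dirv G Q e \<notin> span (dirv G Q ` B)"
    let ?S = "dirv G Q ` B" and ?T = "insert (dirv G Q e) (dirv G Q ` B)"
    have ss: "span ?S \<subset> span ?T"
    proof
      show "span ?S \<subseteq> span ?T" by (rule span_mono) blast
      show "span ?S \<noteq> span ?T" using nsp span_superset[of ?T] by blast
    qed
    then obtain y where y: "y \<noteq> 0" "y \<in> span ?T" "\<And>z. z \<in> span ?S \<Longrightarrow> orthogonal y z"
      using orthogonal_to_subspace_exists_gen[OF ss] by blast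
    obtain k where k: "y - k *\<^sub>R dirv G Q e \<in> span ?S" using y(2) span_breakdown_eq by blast
    have o: "(y - k *\<^sub>R dirv G Q e) \<bullet> y = 0"
      using y(3)[OF k] unfolding orthogonal_def by (simp add: inner_commute)
    have "y \<bullet> y = k * (dirv G Q e \<bullet> y)" using o by (simp add: inner_diff_left)
    then have de: "dirv G Q e \<bullet> y \<noteq> 0" using y(1) by auto
    have "dirv G Q f \<bullet> y = 0" if "f \<in> B" for f
    proof -
      have "dirv G Q f \<in> span ?S" using that by (intro span_base) blast
      then have "y \<bullet> dirv G Q f = 0" using y(3) unfolding orthogonal_def by blast
      then show ?thesis by (metis inner_commute)
    qed
    then have "(y, 0) \<in> Om G Q B" unfolding Om_def by simp
    then have "(y, 0) \<in> Lam G Q {e}" using L by blast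
    then show False using de unfolding Lam_def by simp
  qed
qed


lemma Some_set: "{e. Some e \<in> Some ` B} = B" by auto
lemma Some_set2: "{e. Some e \<in> insert None (Some ` B)} = B" by auto

lemma lift_rank_Some: "lift_rank G n (Some ` B) = n - ecomp G n B + (if balanced G B then 0 else 1)"
  unfolding lift_rank_def Some_set by simp

lemma lift_rank_None: "lift_rank G n (insert None (Some ` B)) = n - ecomp G n B + 1"
  unfolding lift_rank_def Some_set2 by simp

lemma ground_Some: "B \<subseteq> gedges G \<Longrightarrow> Some ` B \<subseteq> lift_ground G"
  unfolding lift_ground_def by auto

lemma ground_None: "B \<subseteq> gedges G \<Longrightarrow> insert None (Some ` B) \<subseteq> lift_ground G"
  unfolding lift_ground_def by auto

lemma ground_split:
  assumes "F \<subseteq> lift_ground G"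
  shows "{e. Some e \<in> F} \<subseteq> gedges G"
    "F = (if None \<in> F then insert None (Some ` {e. Some e \<in> F}) else Some ` {e. Some e \<in> F})"
proof -
  show "{e. Some e \<in> F} \<subseteq> gedges G" using assms unfolding lift_ground_def by auto
  show "F = (if None \<in> F then insert None (Some ` {e. Some e \<in> F}) else Some ` {e. Some e \<in> F})"
  proof (rule set_eqI)
    fix x show "x \<in> F \<longleftrightarrow> x \<in> (if None \<in> F then insert None (Some ` {e. Some e \<in> F}) else Some ` {e. Some e \<in> F})"
      by (cases x) auto
  qed
qed

lemma rank_step:
  assumes gg: "gain_graph n G" and f: "f \<in> gedges G"
  shows "n - ecomp G n (insert f B) = (if conn {1..n} (gends G ` B) (fst (gends G f)) (snd (gends G f))
           then n - ecomp G n B else n - ecomp G n B + 1)"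
proof (cases "conn {1..n} (gends G ` B) (fst (gends G f)) (snd (gends G f))")
  case True then show ?thesis using ecomp_insert_conn[OF True] by simp
next
  case False
  have "ecomp G n (insert f B) + 1 = ecomp G n B" by (rule ecomp_insert_nconn[OF gg f False])
  moreover have "ecomp G n B \<le> n" by (rule ecomp_le)
  ultimately show ?thesis using False by simp
qed

lemma CL1:
  assumes gg: "gain_graph n G" and BE: "B \<subseteq> gedges G"
  shows "lift_flat G n (Some ` B) \<longleftrightarrow> balanced_flat G n B"
proof
  assume lf: "lift_flat G n (Some ` B)"
  have step: "lift_rank G n (Some ` B) < lift_rank G n (insert x (Some ` B))" if "x \<in> lift_ground G - Some ` B" for x
    using lf that unfolding lift_flat_def by blast
  have bal: "balanced G B"
  proof (rule ccontr)
    assume nb: "\<not> balanced G B"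
    have "None \<in> lift_ground G - Some ` B" unfolding lift_ground_def by auto
    from step[OF this] show False using nb by (simp add: lift_rank_Some lift_rank_None)
  qed
  show "balanced_flat G n B" unfolding balanced_flat_def
  proof (intro conjI ballI impI bal)
    fix f assume f: "f \<in> gedges G - B" and c: "conn {1..n} (gends G ` B) (fst (gends G f)) (snd (gends G f))"
    have "Some f \<in> lift_ground G - Some ` B" using f unfolding lift_ground_def by auto
    from step[OF this] have "lift_rank G n (Some ` B) < lift_rank G n (Some ` insert f B)" by simp
    then show "\<not> balanced G (insert f B)"
      using bal ecomp_insert_conn[OF c] lift_rank_Some[of G n "insert f B"] by (simp add: lift_rank_Some split: if_splits)
  qed
next
  assume bf: "balanced_flat G n B"
  then have bal: "balanced G B" unfolding balanced_flat_def by blast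
  show "lift_flat G n (Some ` B)" unfolding lift_flat_def
  proof (intro conjI ballI)
    show "Some ` B \<subseteq> lift_ground G" by (rule ground_Some[OF BE])
  next
    fix x assume x: "x \<in> lift_ground G - Some ` B"
    show "lift_rank G n (Some ` B) < lift_rank G n (insert x (Some ` B))"
    proof (cases x)
      case None then show ?thesis using bal by (simp add: lift_rank_Some lift_rank_None)
    next
      case (Some f)
      have f: "f \<in> gedges G - B" using x Some unfolding lift_ground_def by auto
      have ins: "insert x (Some ` B) = Some ` insert f B" using Some by simp
      show ?thesis
      proof (cases "conn {1..n} (gends G ` B) (fst (gends G f)) (snd (gends G f))")
        case True
        then have "\<not> balanced G (insert f B)" using bf f unfolding balanced_flat_def by blast
        then show ?thesis unfolding ins using bal ecomp_insert_conn[OF True] lift_rank_Some[of G n "insert f B"] by (simp add: lift_rank_Some)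
      next
        case False
        have "n - ecomp G n (insert f B) = n - ecomp G n B + 1"
          using rank_step[OF gg, of f B] f False by simp
        then show ?thesis unfolding ins using bal lift_rank_Some[of G n "insert f B"] by (simp add: lift_rank_Some)
      qed
    qed
  qed
qed

lemma CL2:
  assumes gg: "gain_graph n G" and BE: "B \<subseteq> gedges G"
  shows "lift_flat G n (insert None (Some ` B)) \<longleftrightarrow>
    (\<forall>f\<in>gedges G. conn {1..n} (gends G ` B) (fst (gends G f)) (snd (gends G f)) \<longrightarrow> f \<in> B)"
proof
  assume lf: "lift_flat G n (insert None (Some ` B))"
  show "\<forall>f\<in>gedges G. conn {1..n} (gends G ` B) (fst (gends G f)) (snd (gends G f)) \<longrightarrow> f \<in> B"
  proof (intro ballI impI)
    fix f assume f: "f \<in> gedges G" and c: "conn {1..n} (gends G ` B) (fst (gends G f)) (snd (gends G f))"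
    show "f \<in> B"
    proof (rule ccontr)
      assume "f \<notin> B"
      then have "Some f \<in> lift_ground G - insert None (Some ` B)" using f unfolding lift_ground_def by auto
      then have "lift_rank G n (insert None (Some ` B)) < lift_rank G n (insert (Some f) (insert None (Some ` B)))"
        using lf unfolding lift_flat_def by blast
      moreover have "insert (Some f) (insert None (Some ` B)) = insert None (Some ` insert f B)" by auto
      ultimately show False using ecomp_insert_conn[OF c] lift_rank_None[of G n "insert f B"] by (simp add: lift_rank_None)
    qed
  qed
next
  assume cl: "\<forall>f\<in>gedges G. conn {1..n} (gends G ` B) (fst (gends G f)) (snd (gends G f)) \<longrightarrow> f \<in> B"
  show "lift_flat G n (insert None (Some ` B))" unfolding lift_flat_def
  proof (intro conjI ballI)
    show "insert None (Some ` B) \<subseteq> lift_ground G" by (rule ground_None[OF BE])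
  next
    fix x assume x: "x \<in> lift_ground G - insert None (Some ` B)"
    then obtain f where f: "x = Some f" "f \<in> gedges G" "f \<notin> B" unfolding lift_ground_def by auto
    then have nc: "\<not> conn {1..n} (gends G ` B) (fst (gends G f)) (snd (gends G f))" using cl by blast
    have "insert x (insert None (Some ` B)) = insert None (Some ` insert f B)" using f by auto
    moreover have "n - ecomp G n (insert f B) = n - ecomp G n B + 1"
      using rank_step[OF gg f(2), of B] nc by simp
    ultimately show "lift_rank G n (insert None (Some ` B)) < lift_rank G n (insert x (insert None (Some ` B)))"
      using lift_rank_None[of G n "insert f B"] by (simp add: lift_rank_None)
  qed
qed

lemma arr_recover: "s \<in> arr_lattice G Q \<Longrightarrow> \<Inter> (hyp G Q ` Eof G Q s) = s"
  unfolding arr_lattice_def Eof_def by blast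

lemma proj_recover: "x \<in> proj_lattice G Q \<Longrightarrow> \<Inter> (Hfam G Q ` Xof G Q x) = x"
  unfolding proj_lattice_def Xof_def by blast

lemma gp_iff:
  "general_position G n (Q::nat \<Rightarrow> 'a::euclidean_space) \<longleftrightarrow>
    Eof G Q ` arr_lattice G Q = {S. balanced_flat G n S \<and> n - ecomp G n S \<le> DIM('a)}"
proof -
  have inj: "inj_on (Eof G Q) (arr_lattice G Q)"
    by (rule inj_on_inverseI[where g = "\<lambda>S. \<Inter> (hyp G Q ` S)"]) (rule arr_recover)
  have ord: "\<forall>s\<in>arr_lattice G Q. \<forall>t\<in>arr_lattice G Q. t \<subseteq> s \<longleftrightarrow> Eof G Q s \<subseteq> Eof G Q t"
  proof (intro ballI iffI)
    fix s t assume "s \<in> arr_lattice G Q" "t \<in> arr_lattice G Q" "t \<subseteq> s"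
    then show "Eof G Q s \<subseteq> Eof G Q t" unfolding Eof_def by blast
  next
    fix s t assume st: "s \<in> arr_lattice G Q" "t \<in> arr_lattice G Q" "Eof G Q s \<subseteq> Eof G Q t"
    then have "\<Inter> (hyp G Q ` Eof G Q t) \<subseteq> \<Inter> (hyp G Q ` Eof G Q s)" by blast
    then show "t \<subseteq> s" using arr_recover[OF st(1)] arr_recover[OF st(2)] by simp
  qed
  show ?thesis unfolding general_position_def bij_betw_def using inj ord by blast
qed

lemma pgp_iff:
  "proj_general_position G n (Q::nat \<Rightarrow> 'a::euclidean_space) \<longleftrightarrow>
    Xof G Q ` proj_lattice G Q = trunc_lattice G n DIM('a)"
proof -
  have inj: "inj_on (Xof G Q) (proj_lattice G Q)"
    by (rule inj_on_inverseI[where g = "\<lambda>S. \<Inter> (Hfam G Q ` S)"]) (rule proj_recover)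
  have ord: "\<forall>s\<in>proj_lattice G Q. \<forall>t\<in>proj_lattice G Q. t \<subseteq> s \<longleftrightarrow> Xof G Q s \<subseteq> Xof G Q t"
  proof (intro ballI iffI)
    fix s t assume "s \<in> proj_lattice G Q" "t \<in> proj_lattice G Q" "t \<subseteq> s"
    then show "Xof G Q s \<subseteq> Xof G Q t" unfolding Xof_def by blast
  next
    fix s t assume st: "s \<in> proj_lattice G Q" "t \<in> proj_lattice G Q" "Xof G Q s \<subseteq> Xof G Q t"
    then have "\<Inter> (Hfam G Q ` Xof G Q t) \<subseteq> \<Inter> (Hfam G Q ` Xof G Q s)" by blast
    then show "t \<subseteq> s" using proj_recover[OF st(1)] proj_recover[OF st(2)] by simp
  qed
  show ?thesis unfolding proj_general_position_def bij_betw_def using inj ord by blast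
qed


lemma Xof_Lam:
  assumes nz: "\<forall>e\<in>gedges G. dirv G Q e \<noteq> 0" and ne: "\<Inter> (hyp G Q ` B) \<noteq> {}"
  shows "Xof G Q (Lam G Q B) = Some ` Eof G Q (\<Inter> (hyp G Q ` B))"
proof (rule set_eqI)
  fix a show "a \<in> Xof G Q (Lam G Q B) \<longleftrightarrow> a \<in> Some ` Eof G Q (\<Inter> (hyp G Q ` B))"
  proof (cases a)
    case None then show ?thesis using Lam_not_inf[OF ne] unfolding Xof_def Hfam_def by auto
  next
    case (Some e)
    show ?thesis
    proof (cases "e \<in> gedges G")
      case True
      then have "Hfam G Q a = Lam G Q {e}" using Some nz hP_eq[of G Q e] unfolding Hfam_def by simp
      then show ?thesis using Some True Lam_sub[OF ne, of e] unfolding Xof_def Eof_def lift_ground_def by auto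
    next
      case False then show ?thesis using Some unfolding Xof_def Eof_def lift_ground_def by auto
    qed
  qed
qed

lemma Xof_Om:
  assumes nz: "\<forall>e\<in>gedges G. dirv G Q e \<noteq> 0"
  shows "Xof G Q (Om G Q B) = insert None (Some ` {e \<in> gedges G. dirv G Q e \<in> span (dirv G Q ` B)})"
proof (rule set_eqI)
  fix a show "a \<in> Xof G Q (Om G Q B) \<longleftrightarrow> a \<in> insert None (Some ` {e \<in> gedges G. dirv G Q e \<in> span (dirv G Q ` B)})"
  proof (cases a)
    case None then show ?thesis using Om_inf unfolding Xof_def Hfam_def lift_ground_def by auto
  next
    case (Some e)
    show ?thesis
    proof (cases "e \<in> gedges G")
      case True
      then have "Hfam G Q a = Lam G Q {e}" using Some nz hP_eq[of G Q e] unfolding Hfam_def by simp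
      then show ?thesis using Some True Om_sub[of G Q B e] unfolding Xof_def lift_ground_def by auto
    next
      case False then show ?thesis using Some unfolding Xof_def lift_ground_def by auto
    qed
  qed
qed

lemma Lam_in_proj:
  assumes nz: "\<forall>e\<in>gedges G. dirv G Q e \<noteq> 0" and BE: "B \<subseteq> gedges G"
  shows "Lam G Q B \<in> proj_lattice G Q"
proof -
  have "\<Inter> (Hfam G Q ` (Some ` B)) = Lam G Q B"
    using Inter_Hfam[OF nz ground_Some[OF BE]] by (simp add: Some_set)
  then show ?thesis unfolding proj_lattice_def using ground_Some[OF BE] by blast
qed

lemma Om_in_proj:
  assumes nz: "\<forall>e\<in>gedges G. dirv G Q e \<noteq> 0" and BE: "B \<subseteq> gedges G"
  shows "Om G Q B \<in> proj_lattice G Q"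
proof -
  have "\<Inter> (Hfam G Q ` (insert None (Some ` B))) = Om G Q B"
    using Inter_Hfam[OF nz ground_None[OF BE]] Some_set2[of B] by simp
  then show ?thesis unfolding proj_lattice_def using ground_None[OF BE] by blast
qed

lemma proj_elem:
  assumes nz: "\<forall>e\<in>gedges G. dirv G Q e \<noteq> 0" and x: "x \<in> proj_lattice G Q"
  shows "\<exists>B. B \<subseteq> gedges G \<and> (x = Om G Q B \<or> (x = Lam G Q B \<and> \<Inter> (hyp G Q ` B) \<noteq> {}))"
proof -
  obtain A where A: "A \<subseteq> lift_ground G" "x = \<Inter> (Hfam G Q ` A)" using x unfolding proj_lattice_def by blast
  let ?B = "{e. Some e \<in> A}"
  have BE: "?B \<subseteq> gedges G" by (rule ground_split(1)[OF A(1)])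
  have xe: "x = (if None \<in> A then Om G Q ?B else Lam G Q ?B)" using Inter_Hfam[OF nz A(1)] A(2) by simp
  show ?thesis
  proof (cases "None \<in> A")
    case True then show ?thesis using xe BE by auto
  next
    case False
    show ?thesis
    proof (cases "\<Inter> (hyp G Q ` ?B) = {}")
      case True then show ?thesis using xe BE False Lam_empty[OF True] by auto
    next
      case ne: False then show ?thesis using xe BE False by auto
    qed
  qed
qed

lemma ground_in_trunc: "lift_ground G \<in> trunc_lattice G n d"
  unfolding trunc_lattice_def by simp

lemma K_eq:
  fixes Q :: "nat \<Rightarrow> 'a::euclidean_space"
  assumes gg: "gain_graph n G" and gp: "general_position G n Q" and BE: "B \<subseteq> gedges G"
    and rk: "n - ecomp G n B < DIM('a)"
  shows "{e \<in> gedges G. dirv G Q e \<in> span (dirv G Q ` B)} =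
         {e \<in> gedges G. conn {1..n} (gends G ` B) (fst (gends G e)) (snd (gends G e))}"
proof (rule set_eqI, rule iffI)
  fix e assume e: "e \<in> {e \<in> gedges G. dirv G Q e \<in> span (dirv G Q ` B)}"
  show "e \<in> {e \<in> gedges G. conn {1..n} (gends G ` B) (fst (gends G e)) (snd (gends G e))}"
  proof (rule ccontr)
    assume "e \<notin> {e \<in> gedges G. conn {1..n} (gends G ` B) (fst (gends G e)) (snd (gends G e))}"
    then have nc: "\<not> conn {1..n} (gends G ` B) (fst (gends G e)) (snd (gends G e))" using e by blast
    have e1: "e \<in> gedges G" using e by blast
    have "dim (dirv G Q ` insert e B) = min (n - ecomp G n (insert e B)) DIM('a)"
      by (rule dim_any[OF gg gp]) (use BE e1 in blast)
    moreover have "n - ecomp G n (insert e B) = n - ecomp G n B + 1" using rank_step[OF gg e1, of B] nc by simp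
    moreover have "dim (dirv G Q ` insert e B) = dim (dirv G Q ` B)" using e by (simp add: dim_insert)
    moreover have "dim (dirv G Q ` B) = min (n - ecomp G n B) DIM('a)" by (rule dim_any[OF gg gp BE])
    ultimately show False using rk by simp
  qed
next
  fix e assume e: "e \<in> {e \<in> gedges G. conn {1..n} (gends G ` B) (fst (gends G e)) (snd (gends G e))}"
  then show "e \<in> {e \<in> gedges G. dirv G Q e \<in> span (dirv G Q ` B)}"
    using conn_dir[of n G B _ _ Q] unfolding dirv_def by blast
qed

lemma cl_conn:
  assumes gg: "gain_graph n G" and BE: "B \<subseteq> gedges G"
  defines "K \<equiv> {e \<in> gedges G. conn {1..n} (gends G ` B) (fst (gends G e)) (snd (gends G e))}"
  shows "B \<subseteq> K" "conn {1..n} (gends G ` K) = conn {1..n} (gends G ` B)"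
proof -
  show BK: "B \<subseteq> K" unfolding K_def using conn_ends[OF gg _ BE] BE by blast
  show "conn {1..n} (gends G ` K) = conn {1..n} (gends G ` B)"
  proof (rule conn_eqI)
    show "gends G ` B \<subseteq> gends G ` K" using BK by blast
  next
    fix a b assume "(a, b) \<in> gends G ` K"
    then obtain e where "e \<in> K" "gends G e = (a,b)" by auto
    then show "conn {1..n} (gends G ` B) a b" unfolding K_def by auto
  qed
qed

lemma Om_in_trunc:
  fixes Q :: "nat \<Rightarrow> 'a::euclidean_space"
  assumes gg: "gain_graph n G" and gp: "general_position G n Q" and BE: "B \<subseteq> gedges G"
    and nz: "\<forall>e\<in>gedges G. dirv G Q e \<noteq> 0"
  shows "Xof G Q (Om G Q B) \<in> trunc_lattice G n DIM('a)"
proof (cases "n - ecomp G n B < DIM('a)")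
  case True
  define K where "K = {e \<in> gedges G. conn {1..n} (gends G ` B) (fst (gends G e)) (snd (gends G e))}"
  have X: "Xof G Q (Om G Q B) = insert None (Some ` K)"
    unfolding Xof_Om[OF nz] K_eq[OF gg gp BE True] K_def ..
  have KE: "K \<subseteq> gedges G" unfolding K_def by blast
  have cc: "conn {1..n} (gends G ` K) = conn {1..n} (gends G ` B)" using cl_conn[OF gg BE] unfolding K_def by blast
  have ec: "ecomp G n K = ecomp G n B" unfolding ecomp_def by (rule ncomp_cong[OF cc])
  have "lift_flat G n (insert None (Some ` K))"
    unfolding CL2[OF gg KE] cc unfolding K_def by blast
  moreover have "lift_rank G n (insert None (Some ` K)) \<le> DIM('a)"
    unfolding lift_rank_None ec using True by simp
  ultimately show ?thesis unfolding X trunc_lattice_def by blast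
next
  case False
  have "dim (dirv G Q ` B) = DIM('a)" using dim_any[OF gg gp BE] False by simp
  then have "span (dirv G Q ` B) = UNIV" using dim_eq_full by blast
  then have "Xof G Q (Om G Q B) = lift_ground G" unfolding Xof_Om[OF nz] lift_ground_def by simp
  then show ?thesis using ground_in_trunc by simp
qed

lemma gp_to_pgp:
  fixes Q :: "nat \<Rightarrow> 'a::euclidean_space"
  assumes gg: "gain_graph n G" and gp: "general_position G n Q"
  shows "proj_general_position G n Q"
proof -
  have nz: "\<forall>e\<in>gedges G. dirv G Q e \<noteq> 0" using dir_nonzero[OF gg gp] by blast
  have img: "Eof G Q ` arr_lattice G Q = {S. balanced_flat G n S \<and> n - ecomp G n S \<le> DIM('a)}"
    using gp gp_iff by blast
  show ?thesis unfolding pgp_iff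
  proof (rule set_eqI, rule iffI)
    fix F assume "F \<in> Xof G Q ` proj_lattice G Q"
    then obtain x where x: "x \<in> proj_lattice G Q" "F = Xof G Q x" by blast
    obtain B where B: "B \<subseteq> gedges G" "x = Om G Q B \<or> (x = Lam G Q B \<and> \<Inter> (hyp G Q ` B) \<noteq> {})"
      using proj_elem[OF nz x(1)] by blast
    show "F \<in> trunc_lattice G n DIM('a)"
    proof (cases "x = Om G Q B")
      case True then show ?thesis using Om_in_trunc[OF gg gp B(1) nz] x(2) by simp
    next
      case False
      then have xl: "x = Lam G Q B" and ne: "\<Inter> (hyp G Q ` B) \<noteq> {}" using B(2) by auto
      let ?s = "\<Inter> (hyp G Q ` B)"
      have s: "?s \<in> arr_lattice G Q" unfolding arr_lattice_def using B(1) ne by blast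
      then have "Eof G Q ?s \<in> Eof G Q ` arr_lattice G Q" by (rule imageI)
      then have "Eof G Q ?s \<in> {S. balanced_flat G n S \<and> n - ecomp G n S \<le> DIM('a)}" unfolding img .
      then have bf: "balanced_flat G n (Eof G Q ?s)" "n - ecomp G n (Eof G Q ?s) \<le> DIM('a)" by simp_all
      have EE: "Eof G Q ?s \<subseteq> gedges G" unfolding Eof_def by blast
      have bal: "balanced G (Eof G Q ?s)" using bf(1) unfolding balanced_flat_def by blast
      have "lift_flat G n (Some ` Eof G Q ?s)" using CL1[OF gg EE] bf(1) by blast
      moreover have "lift_rank G n (Some ` Eof G Q ?s) \<le> DIM('a)" using bf(2) bal by (simp add: lift_rank_Some)
      ultimately show ?thesis using x(2) xl Xof_Lam[OF nz ne] unfolding trunc_lattice_def by simp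
    qed
  next
    fix F assume F: "F \<in> trunc_lattice G n DIM('a)"
    show "F \<in> Xof G Q ` proj_lattice G Q"
    proof (cases "F = lift_ground G")
      case True
      let ?x = "\<Inter> (Hfam G Q ` lift_ground G)"
      have "?x \<in> proj_lattice G Q" unfolding proj_lattice_def by blast
      moreover have "Xof G Q ?x = lift_ground G" unfolding Xof_def by blast
      ultimately have "Xof G Q ?x \<in> Xof G Q ` proj_lattice G Q \<and> Xof G Q ?x = lift_ground G" by (metis imageI)
      then show ?thesis using True by metis
    next
      case False
      then have lf: "lift_flat G n F" "lift_rank G n F \<le> DIM('a)" using F unfolding trunc_lattice_def by auto
      have FG: "F \<subseteq> lift_ground G" using lf(1) unfolding lift_flat_def by blast
      let ?B = "{e. Some e \<in> F}"
      have BE: "?B \<subseteq> gedges G" by (rule ground_split(1)[OF FG])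
      show ?thesis
      proof (cases "None \<in> F")
        case True
        then have Fe: "F = insert None (Some ` ?B)" using ground_split(2)[OF FG] by simp
        have cl: "\<forall>f\<in>gedges G. conn {1..n} (gends G ` ?B) (fst (gends G f)) (snd (gends G f)) \<longrightarrow> f \<in> ?B"
          using CL2[OF gg BE] lf(1) Fe by simp
        have rk: "n - ecomp G n ?B < DIM('a)" using lf(2) Fe lift_rank_None[of G n ?B] by simp
        have "Xof G Q (Om G Q ?B) = insert None (Some ` {e \<in> gedges G. conn {1..n} (gends G ` ?B) (fst (gends G e)) (snd (gends G e))})"
          unfolding Xof_Om[OF nz] K_eq[OF gg gp BE rk] ..
        also have "{e \<in> gedges G. conn {1..n} (gends G ` ?B) (fst (gends G e)) (snd (gends G e))} = ?B"
          using cl cl_conn(1)[OF gg BE] by blast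
        finally have "Xof G Q (Om G Q ?B) = F" using Fe by simp
        then show ?thesis using Om_in_proj[OF nz BE] by blast
      next
        case False
        then have Fe: "F = Some ` ?B" using ground_split(2)[OF FG] by simp
        have bf: "balanced_flat G n ?B" using CL1[OF gg BE] lf(1) Fe by simp
        have bal: "balanced G ?B" using bf unfolding balanced_flat_def by blast
        have rk: "n - ecomp G n ?B \<le> DIM('a)" using lf(2) Fe lift_rank_Some[of G n ?B] bal by simp
        have "?B \<in> {S. balanced_flat G n S \<and> n - ecomp G n S \<le> DIM('a)}" using bf rk by simp
        then have "?B \<in> Eof G Q ` arr_lattice G Q" unfolding img .
        then obtain s where s: "s \<in> arr_lattice G Q" "Eof G Q s = ?B" by (metis imageE)
        have se: "\<Inter> (hyp G Q ` ?B) = s" using arr_recover[OF s(1)] s(2) by simp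
        have ne: "\<Inter> (hyp G Q ` ?B) \<noteq> {}" using se arr_nonempty[OF s(1)] by simp
        have "Xof G Q (Lam G Q ?B) = F" using Xof_Lam[OF nz ne] se s(2) Fe by simp
        then show ?thesis using Lam_in_proj[OF nz BE] by blast
      qed
    qed
  qed
qed


lemma balanced_single:
  assumes "e \<in> gedges G"
  shows "balanced G {e}"
  unfolding balanced_def
proof (intro conjI allI impI)
  show "{e} \<subseteq> gedges G" using assms by simp
next
  fix vs es assume c: "circle_in G {e} vs es"
  then have "distinct es" "set es \<subseteq> {e}" "2 \<le> length es" unfolding circle_in_def by auto
  then have "card (set es) = length es" "card (set es) \<le> card {e}"
    using distinct_card[OF \<open>distinct es\<close>] card_mono[of "{e}" "set es"] by auto
  then have "length es \<le> 1" by simp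
  then show "circle_gain G vs es = 0" using \<open>2 \<le> length es\<close> by simp
qed

lemma hP_univ:
  assumes "hyp G Q e = UNIV"
  shows "hP G Q e = UNIV"
proof -
  let ?S = "(\<lambda>P. (P, 1::real)) ` hyp G Q e"
  have "p \<in> span ?S" for p
  proof -
    obtain x t where xt: "p = (x, t)" by force
    show ?thesis
    proof (cases "t = 0")
      case False
      have "(x /\<^sub>R t, 1) \<in> span ?S" using assms by (intro span_base) blast
      then have "t *\<^sub>R (x /\<^sub>R t, 1) \<in> span ?S" by (rule span_scale)
      then show ?thesis using False xt by simp
    next
      case True
      have "(x, 1) - (0, 1) \<in> span ?S" using assms by (intro span_diff span_base) blast+
      then show ?thesis using True xt by simp
    qed
  qed
  then show ?thesis unfolding hP_def by blast
qed

lemma empty_flat: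
  assumes gg: "gain_graph n G"
  shows "{} \<in> trunc_lattice G n d"
proof -
  have "balanced_flat G n {}"
    unfolding balanced_flat_def using balanced_empty gg_ends[OF gg] by (auto simp: conn_empty)
  then have "lift_flat G n (Some ` {})" using CL1[OF gg] by blast
  moreover have "lift_rank G n (Some ` {}) = 0" using lift_rank_Some[of G n "{}"] balanced_empty
    by (simp add: ecomp_empty)
  ultimately show ?thesis unfolding trunc_lattice_def by simp
qed

lemma pgp_nz:
  fixes Q :: "nat \<Rightarrow> 'a::euclidean_space"
  assumes gg: "gain_graph n G" and pgp: "proj_general_position G n Q" and e: "e \<in> gedges G"
  shows "dirv G Q e \<noteq> 0"
proof
  assume z: "dirv G Q e = 0"
  have img: "Xof G Q ` proj_lattice G Q = trunc_lattice G n DIM('a)" using pgp pgp_iff by blast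
  have eg: "Some e \<in> lift_ground G" using e unfolding lift_ground_def by simp
  show False
  proof (cases "kap G Q e = 0")
    case True
    then have "hyp G Q e = UNIV" unfolding hyp_eq z by simp
    then have hu: "hP G Q e = UNIV" by (rule hP_univ)
    have "{} \<in> Xof G Q ` proj_lattice G Q" unfolding img by (rule empty_flat[OF gg])
    then obtain x where "Xof G Q x = {}" by blast
    moreover have "Some e \<in> Xof G Q x" unfolding Xof_def Hfam_def using eg hu by simp
    ultimately show False by simp
  next
    case False
    then have "hyp G Q e = {}" unfolding hyp_eq z by simp
    then have h0: "hP G Q e = {0}" unfolding hP_def by simp
    obtain F where F: "{e} \<subseteq> F" "balanced_flat G n F" "conn {1..n} (gends G ` F) = conn {1..n} (gends G ` {e})"
      using max_extension[OF gg balanced_single[OF e]] by blast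
    have FE: "F \<subseteq> gedges G" using F(2) unfolding balanced_flat_def balanced_def by blast
    have nc: "\<not> conn {1..n} (gends G ` {}) (fst (gends G e)) (snd (gends G e))"
      using gg_ends[OF gg e] by (simp add: conn_empty)
    have c: "ecomp G n {e} + 1 = n" using ecomp_insert_nconn[OF gg e nc] by (simp add: ecomp_empty)
    have ec: "ecomp G n F = ecomp G n {e}" unfolding ecomp_def by (rule ncomp_cong[OF F(3)])
    have bal: "balanced G F" using F(2) unfolding balanced_flat_def by blast
    have "lift_flat G n (Some ` F)" using CL1[OF gg FE] F(2) by blast
    moreover have "lift_rank G n (Some ` F) \<le> DIM('a)"
    proof -
      have "n - ecomp G n {e} = 1" using c by simp
      moreover have "1 \<le> DIM('a)" using DIM_positive[where 'a='a] by linarith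
      ultimately show ?thesis using lift_rank_Some[of G n F] bal ec by simp
    qed
    ultimately have "Some ` F \<in> trunc_lattice G n DIM('a)" unfolding trunc_lattice_def by blast
    then have "Some ` F \<in> Xof G Q ` proj_lattice G Q" unfolding img .
    then obtain x where x: "Xof G Q x = Some ` F" by blast
    then have "Some e \<in> Xof G Q x" using F(1) by blast
    then have "x \<subseteq> {0}" unfolding Xof_def Hfam_def using h0 by simp
    then have "None \<in> Xof G Q x" unfolding Xof_def Hfam_def h_inf_def lift_ground_def by auto
    then show False using x by auto
  qed
qed

lemma pgp_to_gp:
  fixes Q :: "nat \<Rightarrow> 'a::euclidean_space"
  assumes gg: "gain_graph n G" and pgp: "proj_general_position G n Q"
  shows "general_position G n Q"
proof -
  have nz: "\<forall>e\<in>gedges G. dirv G Q e \<noteq> 0" using pgp_nz[OF gg pgp] by blast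
  have img: "Xof G Q ` proj_lattice G Q = trunc_lattice G n DIM('a)" using pgp pgp_iff by blast
  show ?thesis unfolding gp_iff
  proof (rule set_eqI, rule iffI)
    fix B assume "B \<in> Eof G Q ` arr_lattice G Q"
    then obtain s where s: "s \<in> arr_lattice G Q" "B = Eof G Q s" by blast
    have BE: "B \<subseteq> gedges G" using s(2) unfolding Eof_def by blast
    have se: "\<Inter> (hyp G Q ` B) = s" using arr_recover[OF s(1)] s(2) by simp
    have ne: "\<Inter> (hyp G Q ` B) \<noteq> {}" using se arr_nonempty[OF s(1)] by simp
    have X: "Xof G Q (Lam G Q B) = Some ` B" using Xof_Lam[OF nz ne] se s(2) by simp
    have "Xof G Q (Lam G Q B) \<in> Xof G Q ` proj_lattice G Q" using Lam_in_proj[OF nz BE] by (rule imageI)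
    then have T: "Some ` B \<in> trunc_lattice G n DIM('a)" unfolding img X .
    have "None \<in> lift_ground G" unfolding lift_ground_def by simp
    then have "Some ` B \<noteq> lift_ground G" by auto
    then have lf: "lift_flat G n (Some ` B)" "lift_rank G n (Some ` B) \<le> DIM('a)"
      using T unfolding trunc_lattice_def by auto
    have bf: "balanced_flat G n B" using CL1[OF gg BE] lf(1) by blast
    then have "balanced G B" unfolding balanced_flat_def by blast
    then have "n - ecomp G n B \<le> DIM('a)" using lf(2) lift_rank_Some[of G n B] by simp
    then show "B \<in> {S. balanced_flat G n S \<and> n - ecomp G n S \<le> DIM('a)}" using bf by simp
  next
    fix B assume B: "B \<in> {S. balanced_flat G n S \<and> n - ecomp G n S \<le> DIM('a)}"
    then have bf: "balanced_flat G n B" and rk: "n - ecomp G n B \<le> DIM('a)" by simp_all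
    have bal: "balanced G B" using bf unfolding balanced_flat_def by blast
    have BE: "B \<subseteq> gedges G" using bal unfolding balanced_def by blast
    have "lift_flat G n (Some ` B)" using CL1[OF gg BE] bf by blast
    moreover have "lift_rank G n (Some ` B) \<le> DIM('a)" using rk bal lift_rank_Some[of G n B] by simp
    ultimately have "Some ` B \<in> trunc_lattice G n DIM('a)" unfolding trunc_lattice_def by blast
    then have "Some ` B \<in> Xof G Q ` proj_lattice G Q" unfolding img .
    then obtain x where x: "x \<in> proj_lattice G Q" "Xof G Q x = Some ` B" by blast
    obtain B' where B': "B' \<subseteq> gedges G" "x = Om G Q B' \<or> (x = Lam G Q B' \<and> \<Inter> (hyp G Q ` B') \<noteq> {})"
      using proj_elem[OF nz x(1)] by blast
    have "x \<noteq> Om G Q B'"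
    proof
      assume "x = Om G Q B'"
      then have "None \<in> Xof G Q x" using Xof_Om[OF nz] by simp
      then show False using x(2) by auto
    qed
    then have xl: "x = Lam G Q B'" and ne: "\<Inter> (hyp G Q ` B') \<noteq> {}" using B'(2) by auto
    have "Some ` Eof G Q (\<Inter> (hyp G Q ` B')) = Some ` B" using Xof_Lam[OF nz ne] x(2) xl by simp
    then have "Eof G Q (\<Inter> (hyp G Q ` B')) = B" by (simp add: inj_image_eq_iff)
    moreover have "\<Inter> (hyp G Q ` B') \<in> arr_lattice G Q" unfolding arr_lattice_def using B'(1) ne by blast
    ultimately show "B \<in> Eof G Q ` arr_lattice G Q" by (metis imageI)
  qed
qed


lemma conn_isolated:
  assumes "conn V R i j" "i \<noteq> j"
  shows "j \<in> fst ` R \<union> snd ` R"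
proof -
  from assms(1) have "(i, j) \<in> (Restr (R \<union> R\<inverse>) V)\<^sup>*" unfolding conn_def .
  then show ?thesis
  proof (rule rtranclE)
    assume "i = j" then show ?thesis using assms(2) by simp
  next
    fix y assume "(y, j) \<in> Restr (R \<union> R\<inverse>) V"
    then show ?thesis by (auto intro: rev_image_eqI)
  qed
qed

lemma ncomp_ge2:
  assumes "finite V" "u \<in> V" "v \<in> V" "\<not> conn V R u v"
  shows "2 \<le> ncomp V R"
proof -
  have "v \<in> vcomp V R v" "v \<notin> vcomp V R u" using assms unfolding vcomp_def by auto
  then have ne: "vcomp V R u \<noteq> vcomp V R v" by blast
  have "card {vcomp V R u, vcomp V R v} \<le> card (vcomp V R ` V)"
    by (rule card_mono) (use assms in auto)
  then show ?thesis unfolding ncomp_comp using ne by simp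
qed

lemma part_i:
  fixes Q :: "nat \<Rightarrow> 'a::euclidean_space"
  assumes igp: "ideal_general_position n Q"
  shows "simple_position n Q"
  unfolding simple_position_def
proof (intro allI impI conjI)
  fix I assume I: "I \<subseteq> {1..n}" and cI: "card I \<le> DIM('a) + 1"
  have inj: "inj_on Q {1..n}" using igp unfolding ideal_general_position_def by blast
  then show "inj_on Q I" using I inj_on_subset by blast
  have finI: "finite I" using I finite_subset by blast
  show "\<not> affine_dependent (Q ` I)"
  proof (cases "I = {}")
    case True then show ?thesis by simp
  next
    case False
    define m where "m = Min I"
    have mI: "m \<in> I" using finI False unfolding m_def by simp
    have mle: "\<And>j. j \<in> I \<Longrightarrow> m \<le> j" using finI unfolding m_def by simp
    define J where "J = I - {m}"
    define T where "T = (\<lambda>j. (m, j)) ` J"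
    have finJ: "finite J" using finI unfolding J_def by simp
    have "card I > 0" using finI mI card_gt_0_iff by blast
    then have cJ: "card J + 1 = card I" using finI mI unfolding J_def by simp
    have Tsub: "T \<subseteq> {(i, j). i \<in> {1..n} \<and> j \<in> {1..n} \<and> i < j}"
    proof
      fix p assume "p \<in> T"
      then obtain j where j: "j \<in> J" "p = (m, j)" unfolding T_def by blast
      have "m \<le> j" "j \<noteq> m" "j \<in> I" using j(1) mle unfolding J_def by auto
      then show "p \<in> {(i, j). i \<in> {1..n} \<and> j \<in> {1..n} \<and> i < j}" using j(2) mI I by auto
    qed
    have star: "ncomp {1..n} ((\<lambda>j. (m, j)) ` J') + card J' = n" if "J' \<subseteq> J" for J'
    proof -
      have "finite J'" using that finJ finite_subset by blast
      then show ?thesis using that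
      proof (induction J' rule: finite_induct)
        case empty then show ?case by (simp add: ncomp_empty)
      next
        case (insert j J')
        have jJ: "j \<in> J" "j \<noteq> m" "j \<in> {1..n}" "m \<in> {1..n}" using insert.prems I mI unfolding J_def by auto
        have nc: "\<not> conn {1..n} ((\<lambda>j. (m, j)) ` J') m j"
        proof
          assume "conn {1..n} ((\<lambda>j. (m, j)) ` J') m j"
          moreover have "m \<noteq> j" using jJ(2) by simp
          ultimately have "j \<in> fst ` ((\<lambda>j. (m, j)) ` J') \<union> snd ` ((\<lambda>j. (m, j)) ` J')"
            by (rule conn_isolated)
          then show False using jJ(2) insert.hyps(2) by auto
        qed
        have "ncomp {1..n} (insert (m, j) ((\<lambda>j. (m, j)) ` J')) + 1 = ncomp {1..n} ((\<lambda>j. (m, j)) ` J')"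
          by (rule ncomp_insert_nconn[OF _ jJ(4) jJ(3) nc]) simp
        then show ?case using insert by simp
      qed
    qed
    have nT: "n - ncomp {1..n} T = card J" using star[of J] unfolding T_def by simp
    let ?S = "(\<lambda>j. Q j - Q m) ` J"
    have dT: "(\<lambda>(i, j). Q j - Q i) ` T = ?S" unfolding T_def by auto
    have "dim ((\<lambda>(i, j). Q j - Q i) ` T) = min (n - ncomp {1..n} T) DIM('a)"
    proof -
      have all: "\<forall>T. T \<subseteq> {(i, j). i \<in> {1..n} \<and> j \<in> {1..n} \<and> i < j} \<longrightarrow>
        dim ((\<lambda>(i, j). Q j - Q i) ` T) = min (n - ncomp {1..n} T) DIM('a)"
        using igp unfolding ideal_general_position_def by (rule conjunct2)
      show ?thesis using all Tsub by blast
    qed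
    then have "dim ?S = min (card J) DIM('a)" unfolding nT dT .
    also have "\<dots> = card J" using cI cJ by linarith
    finally have dimS: "dim ?S = card J" .
    have finS: "finite ?S" using finJ by simp
    have "card ?S \<le> card J" using finJ by (rule card_image_le)
    moreover have "dim ?S \<le> card ?S" using dim_le_card[OF span_superset finS] .
    ultimately have cS: "card ?S = dim ?S" using dimS by linarith
    have "?S \<subseteq> span ?S" by (rule span_superset)
    then have indep: "independent ?S" using card_eq_dim[OF subset_refl cS finS] by blast
    have QI: "Q ` I = insert (Q m) (Q ` J)" using mI unfolding J_def by (metis insert_Diff image_insert)
    have notin: "Q m \<notin> Q ` J"
    proof
      assume "Q m \<in> Q ` J"
      then obtain j where j: "j \<in> J" "Q j = Q m" by auto
      then have "j \<in> {1..n}" "j \<noteq> m" using I unfolding J_def by auto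
      then show False using inj_onD[OF inj j(2)] mI I by auto
    qed
    have eq: "(\<lambda>x. - Q m + x) ` (Q ` J) = ?S" unfolding image_image by (rule image_cong) simp_all
    show ?thesis unfolding QI affine_dependent_iff_dependent[OF notin] eq using indep by simp
  qed
qed

lemma part_iv:
  fixes Q :: "nat \<Rightarrow> 'a::euclidean_space"
  assumes gg: "gain_graph n G" and cp: "complete_gg n G" and gp: "general_position G n Q"
  shows "ideal_general_position n Q"
  unfolding ideal_general_position_def
proof (intro conjI allI impI)
  have nz: "\<forall>e\<in>gedges G. dirv G Q e \<noteq> 0" using dir_nonzero[OF gg gp] by blast
  show "inj_on Q {1..n}"
  proof (rule inj_onI, rule ccontr)
    fix i j assume ij: "i \<in> {1..n}" "j \<in> {1..n}" "Q i = Q j" "i \<noteq> j"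
    then obtain e where e: "e \<in> gedges G" "joins G e i j" using cp unfolding complete_gg_def by blast
    then have "dirv G Q e = 0" using ij unfolding joins_def dirv_def by auto
    then show False using nz e by blast
  qed
next
  fix T assume T: "T \<subseteq> {(i, j). i \<in> {1..n} \<and> j \<in> {1..n} \<and> i < j}"
  define f where "f p = (SOME e. e \<in> gedges G \<and> joins G e (fst p) (snd p))" for p
  have fp: "f p \<in> gedges G \<and> joins G (f p) (fst p) (snd p)" if "p \<in> T" for p
  proof -
    have "fst p \<in> {1..n}" "snd p \<in> {1..n}" "fst p \<noteq> snd p" using that T by auto
    then have "\<exists>e\<in>gedges G. joins G e (fst p) (snd p)" using cp unfolding complete_gg_def by blast
    then have "\<exists>e. e \<in> gedges G \<and> joins G e (fst p) (snd p)" by blast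
    then show ?thesis unfolding f_def by (rule someI_ex)
  qed
  define A where "A = f ` T"
  have AE: "A \<subseteq> gedges G" unfolding A_def using fp by blast
  have gp_eq: "gends G (f p) = p \<or> gends G (f p) = (snd p, fst p)" if "p \<in> T" for p
    using fp[OF that] unfolding joins_def by auto
  have sym: "gends G ` A \<union> (gends G ` A)\<inverse> = T \<union> T\<inverse>"
  proof (rule set_eqI, rule iffI)
    fix q assume q: "q \<in> gends G ` A \<union> (gends G ` A)\<inverse>"
    obtain a b where ab: "q = (a, b)" by force
    have "(a, b) \<in> gends G ` A \<or> (b, a) \<in> gends G ` A" using q ab by auto
    then show "q \<in> T \<union> T\<inverse>"
    proof
      assume "(a, b) \<in> gends G ` A"
      then obtain p where p: "p \<in> T" "(a, b) = gends G (f p)" unfolding A_def by blast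
      obtain x y where xy: "p = (x, y)" by force
      from gp_eq[OF p(1)] p(2) xy have "(a, b) = (x, y) \<or> (a, b) = (y, x)" by auto
      then show ?thesis using p(1) xy ab by auto
    next
      assume "(b, a) \<in> gends G ` A"
      then obtain p where p: "p \<in> T" "(b, a) = gends G (f p)" unfolding A_def by blast
      obtain x y where xy: "p = (x, y)" by force
      from gp_eq[OF p(1)] p(2) xy have "(b, a) = (x, y) \<or> (b, a) = (y, x)" by auto
      then show ?thesis using p(1) xy ab by auto
    qed
  next
    fix q assume q: "q \<in> T \<union> T\<inverse>"
    obtain a b where ab: "q = (a, b)" by force
    have c: "(a, b) \<in> T \<or> (b, a) \<in> T" using q ab by auto
    have h: "gends G (f p) \<in> gends G ` A" if "p \<in> T" for p using that unfolding A_def by blast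
    from c show "q \<in> gends G ` A \<union> (gends G ` A)\<inverse>"
    proof
      assume p: "(a, b) \<in> T"
      from gp_eq[OF p] have "gends G (f (a, b)) = (a, b) \<or> gends G (f (a, b)) = (b, a)" by simp
      then show ?thesis using h[OF p] ab by auto
    next
      assume p: "(b, a) \<in> T"
      from gp_eq[OF p] have "gends G (f (b, a)) = (b, a) \<or> gends G (f (b, a)) = (a, b)" by simp
      then show ?thesis using h[OF p] ab by auto
    qed
  qed
  have cc: "conn {1..n} (gends G ` A) = conn {1..n} T"
    unfolding conn_def[abs_def] sym ..
  have ec: "ecomp G n A = ncomp {1..n} T" unfolding ecomp_def by (rule ncomp_cong[OF cc])
  have "span (dirv G Q ` A) = span ((\<lambda>(i, j). Q j - Q i) ` T)"
  proof (rule span_eq[THEN iffD2], rule conjI)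
    show "dirv G Q ` A \<subseteq> span ((\<lambda>(i, j). Q j - Q i) ` T)"
    proof
      fix x assume "x \<in> dirv G Q ` A"
      then obtain p where p: "p \<in> T" "x = dirv G Q (f p)" unfolding A_def by blast
      have b: "Q (snd p) - Q (fst p) \<in> span ((\<lambda>(i, j). Q j - Q i) ` T)"
      proof -
        have "Q (snd p) - Q (fst p) = (\<lambda>(i, j). Q j - Q i) p" by (simp add: case_prod_beta)
        then have "Q (snd p) - Q (fst p) \<in> (\<lambda>(i, j). Q j - Q i) ` T" using p(1) by (metis imageI)
        then show ?thesis by (rule span_base)
      qed
      show "x \<in> span ((\<lambda>(i, j). Q j - Q i) ` T)"
        using gp_eq[OF p(1)] p(2) b span_neg[OF b] unfolding dirv_def by auto
    qed
  next
    show "(\<lambda>(i, j). Q j - Q i) ` T \<subseteq> span (dirv G Q ` A)"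
    proof
      fix x assume "x \<in> (\<lambda>(i, j). Q j - Q i) ` T"
      then obtain p where p: "p \<in> T" "x = Q (snd p) - Q (fst p)" by auto
      have b: "dirv G Q (f p) \<in> span (dirv G Q ` A)" using p(1) unfolding A_def by (intro span_base) blast
      have "dirv G Q (f p) = x \<or> dirv G Q (f p) = - x" using gp_eq[OF p(1)] p(2) unfolding dirv_def by auto
      then show "x \<in> span (dirv G Q ` A)" using b span_neg[OF b] by auto
    qed
  qed
  then have "dim ((\<lambda>(i, j). Q j - Q i) ` T) = dim (dirv G Q ` A)" by (metis dim_span)
  also have "\<dots> = min (n - ecomp G n A) DIM('a)" by (rule dim_any[OF gg gp AE])
  finally show "dim ((\<lambda>(i, j). Q j - Q i) ` T) = min (n - ncomp {1..n} T) DIM('a)" using ec by simp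
qed


definition G0 :: "nat gain_graph" where
  "G0 = \<lparr>gedges = {}, gends = (\<lambda>_. (1, 2)), ggain = (\<lambda>_. 0)\<rparr>"

lemma example1:
  "\<exists>(n'::nat) (G'::nat gain_graph) (Q'::nat \<Rightarrow> 'a::euclidean_space).
     gain_graph n' G' \<and> disconnected_gg n' G' \<and> general_position G' n' Q' \<and> \<not> ideal_general_position n' Q'"
proof (intro exI conjI)
  show "gain_graph 2 G0" unfolding gain_graph_def G0_def by simp
  show "disconnected_gg 2 G0" unfolding disconnected_gg_def G0_def by (simp add: ecomp_empty)
  have ni: "\<not> inj_on (\<lambda>_. 0::'a) {1..2::nat}"
  proof
    assume "inj_on (\<lambda>_. 0::'a) {1..2::nat}"
    from inj_onD[OF this, of 1 2] show False by simp
  qed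
  then show "\<not> ideal_general_position 2 (\<lambda>_. 0::'a)" unfolding ideal_general_position_def by blast
  have arr: "arr_lattice G0 (\<lambda>_. 0::'a) = {UNIV}"
  proof (rule set_eqI, rule iffI)
    fix s assume "s \<in> arr_lattice G0 (\<lambda>_. 0::'a)"
    then obtain A where "A \<subseteq> gedges G0" "s = \<Inter> (hyp G0 (\<lambda>_. 0::'a) ` A)" unfolding arr_lattice_def by blast
    then have "A = {}" "s = \<Inter> (hyp G0 (\<lambda>_. 0::'a) ` A)" unfolding G0_def by auto
    then show "s \<in> {UNIV}" by simp
  next
    fix s :: "'a set" assume "s \<in> {UNIV}"
    then have "s = \<Inter> (hyp G0 (\<lambda>_. 0::'a) ` {})" "{} \<subseteq> gedges G0" "\<Inter> (hyp G0 (\<lambda>_. 0::'a) ` {}) \<noteq> {}" by auto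
    then show "s \<in> arr_lattice G0 (\<lambda>_. 0::'a)" unfolding arr_lattice_def by blast
  qed
  have Eu: "Eof G0 (\<lambda>_. 0::'a) UNIV = {}" unfolding Eof_def G0_def by simp
  have bfe: "balanced_flat G0 2 {}" unfolding balanced_flat_def G0_def using balanced_empty by auto
  have "{S. balanced_flat G0 2 S \<and> 2 - ecomp G0 2 S \<le> DIM('a)} = {{}}"
  proof (rule set_eqI, rule iffI)
    fix S assume "S \<in> {S. balanced_flat G0 2 S \<and> 2 - ecomp G0 2 S \<le> DIM('a)}"
    then have "S \<subseteq> gedges G0" unfolding balanced_flat_def balanced_def by blast
    then show "S \<in> {{}}" unfolding G0_def by simp
  next
    fix S :: "nat set" assume "S \<in> {{}}"
    then show "S \<in> {S. balanced_flat G0 2 S \<and> 2 - ecomp G0 2 S \<le> DIM('a)}" using bfe by (simp add: ecomp_empty)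
  qed
  then show "general_position G0 2 (\<lambda>_. 0::'a)" unfolding gp_iff arr using Eu by simp
qed

lemma sum_rot:
  fixes g :: "nat \<Rightarrow> real"
  assumes "0 < L"
  shows "(\<Sum>m<L. g ((m + 1) mod L)) = (\<Sum>m<L. g m)"
proof -
  obtain L' where L: "L = Suc L'" using assms by (cases L) auto
  have "(\<Sum>m<Suc L'. g ((m + 1) mod Suc L')) = (\<Sum>m<L'. g ((m + 1) mod Suc L')) + g ((L' + 1) mod Suc L')"
    by simp
  also have "(\<Sum>m<L'. g ((m + 1) mod Suc L')) = (\<Sum>m<L'. g (Suc m))" by (rule sum.cong) auto
  also have "g ((L' + 1) mod Suc L') = g 0" by simp
  also have "(\<Sum>m<L'. g (Suc m)) + g 0 = (\<Sum>m<Suc L'. g m)" by (subst sum.lessThan_Suc_shift) simp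
  finally show ?thesis unfolding L .
qed

lemma potential_balanced:
  assumes pot: "\<forall>e\<in>gedges G. ggain G e = phi (snd (gends G e)) - phi (fst (gends G e))"
    and S: "S \<subseteq> gedges G"
  shows "balanced G S"
  unfolding balanced_def
proof (intro conjI allI impI S)
  fix vs es assume c: "circle_in G S vs es"
  let ?L = "length es"
  have L: "2 \<le> ?L" "set es \<subseteq> S" "\<And>m. m < ?L \<Longrightarrow> joins G (es ! m) (vs ! m) (vs ! ((m + 1) mod ?L))"
    using c unfolding circle_in_def by auto
  have g: "gain G (es ! m) (vs ! m) (vs ! ((m + 1) mod ?L)) = phi (vs ! ((m + 1) mod ?L)) - phi (vs ! m)"
    if m: "m < ?L" for m
  proof -
    have eS: "es ! m \<in> gedges G" using L(2) S nth_mem[OF m] by blast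
    then have pe: "ggain G (es ! m) = phi (snd (gends G (es ! m))) - phi (fst (gends G (es ! m)))" using pot by blast
    show ?thesis using L(3)[OF m] pe unfolding joins_def gain_def by auto
  qed
  have "circle_gain G vs es = (\<Sum>m<?L. phi (vs ! ((m + 1) mod ?L)) - phi (vs ! m))"
    unfolding circle_gain_def using g by (intro sum.cong) auto
  also have "\<dots> = (\<Sum>m<?L. phi (vs ! ((m + 1) mod ?L))) - (\<Sum>m<?L. phi (vs ! m))"
    by (rule sum_subtractf)
  also have "(\<Sum>m<?L. phi (vs ! ((m + 1) mod ?L))) = (\<Sum>m<?L. phi (vs ! m))"
  proof -
    have "0 < ?L" using L(1) by linarith
    from sum_rot[OF this, of "\<lambda>m. phi (vs ! m)"] show ?thesis by simp
  qed
  finally show "circle_gain G vs es = 0" by simp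
qed

lemma ncomp_one:
  assumes "V \<noteq> {}" "\<And>u v. u \<in> V \<Longrightarrow> v \<in> V \<Longrightarrow> conn V R u v"
  shows "ncomp V R = 1"
proof -
  have "(\<lambda>v. {u \<in> V. conn V R v u}) ` V = {V}" using assms by auto
  then show ?thesis unfolding ncomp_def by simp
qed


definition Qp :: "(nat \<Rightarrow> 'a::euclidean_space) \<Rightarrow> nat \<Rightarrow> nat \<Rightarrow> 'a" where
  "Qp b d k = (if k = d + 2 then 0 else (\<Sum>i\<in>{1..<k}. b i))"

definition tp :: "nat \<Rightarrow> nat \<Rightarrow> real" where
  "tp d k = (if k = d + 1 then 1 else 0)"

definition Gp :: "(nat \<Rightarrow> 'a::euclidean_space) \<Rightarrow> nat \<Rightarrow> nat gain_graph" where
  "Gp b d = \<lparr>gedges = {1..d+1}, gends = (\<lambda>k. (k, Suc k)),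
     ggain = (\<lambda>k. 2 * tp d k + (norm (Qp b d k))\<^sup>2 - (norm (Qp b d (Suc k)))\<^sup>2)\<rparr>"

lemma Gp_simps[simp]: "gedges (Gp b d) = {1..d+1}" "gends (Gp b d) = (\<lambda>k. (k, Suc k))"
  "ggain (Gp b d) k = 2 * tp d k + (norm (Qp b d k))\<^sup>2 - (norm (Qp b d (Suc k)))\<^sup>2"
  unfolding Gp_def by simp_all

lemma Gp_gg: "gain_graph (d + 2) (Gp b d)"
  unfolding gain_graph_def by auto

lemma Gp_kap: "kap (Gp b d) (Qp b d) k = tp d k"
  unfolding kap_def by simp

lemma Gp_cut:
  assumes "k \<notin> A" "conn V ((\<lambda>k. (k, Suc k)) ` A) i j"
  shows "i \<le> k \<longleftrightarrow> j \<le> k"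
  using assms(2) unfolding conn_def
proof (induction rule: rtrancl_induct)
  case base then show ?case by simp
next
  case (step y z)
  then obtain m where m: "m \<in> A" "(y, z) = (m, Suc m) \<or> (z, y) = (m, Suc m)" by auto
  have "m \<noteq> k" using m(1) assms(1) by blast
  then have "y \<le> k \<longleftrightarrow> z \<le> k" using m(2) by auto
  then show ?case using step.IH by simp
qed

lemma Gp_full_conn:
  assumes "j \<in> {1..d+2}"
  shows "conn {1..d+2} ((\<lambda>k. (k, Suc k)) ` {1..d+1}) 1 j"
  using assms
proof (induction j)
  case 0 then show ?case by simp
next
  case (Suc j)
  show ?case
  proof (cases "j = 0")
    case True then show ?thesis by simp
  next
    case False
    then have IH: "conn {1..d+2} ((\<lambda>k. (k, Suc k)) ` {1..d+1}) 1 j" using Suc by simp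
    have "conn {1..d+2} ((\<lambda>k. (k, Suc k)) ` {1..d+1}) j (Suc j)"
      using False Suc.prems by (intro conn_edge) auto
    then show ?thesis using conn_trans[OF IH] by blast
  qed
qed

lemma Gp_ecomp_full: "ecomp (Gp b d) (d + 2) {1..d+1} = 1"
proof -
  have "ncomp {1..d+2} ((\<lambda>k. (k, Suc k)) ` {1..d+1}) = 1"
  proof (rule ncomp_one)
    show "{1..d+2} \<noteq> {}" by simp
    fix u v assume "u \<in> {1..d + 2}" "v \<in> {1..d + 2}"
    then show "conn {1..d + 2} ((\<lambda>k. (k, Suc k)) ` {1..d + 1}) u v"
      using Gp_full_conn conn_sym conn_trans by metis
  qed
  then show ?thesis unfolding ecomp_def by simp
qed

lemma Gp_pot: "ggain (Gp b d) k = (\<lambda>k. - (norm (Qp b d k))\<^sup>2 + 2 * (\<Sum>i\<in>{1..<k}. tp d i)) (Suc k)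
   - (\<lambda>k. - (norm (Qp b d k))\<^sup>2 + 2 * (\<Sum>i\<in>{1..<k}. tp d i)) k" if "1 \<le> k"
  using that by (simp add: sum.atLeastLessThan_Suc)

lemma Gp_balanced:
  assumes "S \<subseteq> {1..d+1}"
  shows "balanced (Gp b d) S"
  by (rule potential_balanced[where phi = "\<lambda>k. - (norm (Qp b d k))\<^sup>2 + 2 * (\<Sum>i\<in>{1..<k}. tp d i)"])
     (use assms Gp_pot in auto)

lemma Gp_BF:
  "{S. balanced_flat (Gp b d) (d + 2) S \<and> d + 2 - ecomp (Gp b d) (d + 2) S \<le> d} =
   {A. A \<subseteq> {1..d+1} \<and> A \<noteq> {1..d+1}}"
proof (rule set_eqI, rule iffI)
  fix S assume "S \<in> {S. balanced_flat (Gp b d) (d + 2) S \<and> d + 2 - ecomp (Gp b d) (d + 2) S \<le> d}"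
  then have S: "balanced_flat (Gp b d) (d + 2) S" "d + 2 - ecomp (Gp b d) (d + 2) S \<le> d" by simp_all
  have "S \<subseteq> {1..d+1}" using S(1) unfolding balanced_flat_def balanced_def by simp
  moreover have "S \<noteq> {1..d+1}" using S(2) Gp_ecomp_full[of b d] by auto
  ultimately show "S \<in> {A. A \<subseteq> {1..d+1} \<and> A \<noteq> {1..d+1}}" by simp
next
  fix S assume "S \<in> {A. A \<subseteq> {1..d+1} \<and> A \<noteq> {1..d+1}}"
  then have S: "S \<subseteq> {1..d+1}" "S \<noteq> {1..d+1}" by simp_all
  have nc: "\<not> conn {1..d+2} ((\<lambda>k. (k, Suc k)) ` S) k (Suc k)" if "k \<notin> S" for k
  proof
    assume c: "conn {1..d+2} ((\<lambda>k. (k, Suc k)) ` S) k (Suc k)"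
    from Gp_cut[OF that c] show False by simp
  qed
  have bf: "balanced_flat (Gp b d) (d + 2) S"
    unfolding balanced_flat_def using Gp_balanced[OF S(1)] nc by auto
  obtain k where k: "k \<in> {1..d+1}" "k \<notin> S" using S by blast
  have "2 \<le> ncomp {1..d+2} ((\<lambda>k. (k, Suc k)) ` S)"
    by (rule ncomp_ge2[OF _ _ _ nc[OF k(2)]]) (use k(1) in auto)
  then have "d + 2 - ecomp (Gp b d) (d + 2) S \<le> d" unfolding ecomp_def by simp
  then show "S \<in> {S. balanced_flat (Gp b d) (d + 2) S \<and> d + 2 - ecomp (Gp b d) (d + 2) S \<le> d}"
    using bf by simp
qed

lemma Gp_sep: "1 \<le> d \<Longrightarrow> separable_gg (d + 2) (Gp b d)"
  unfolding separable_gg_def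
proof (intro bexI[of _ 2])
  assume d: "1 \<le> d"
  let ?R = "gends (Gp b d) ` {e \<in> gedges (Gp b d). \<not> (fst (gends (Gp b d) e) = 2 \<or> snd (gends (Gp b d) e) = 2)}"
  have n1: "1 \<notin> fst ` ?R \<union> snd ` ?R" by auto
  have nc: "\<not> conn ({1..d+2} - {2}) ?R 3 1"
  proof
    assume "conn ({1..d+2} - {2}) ?R 3 1"
    from conn_isolated[OF this] n1 show False by simp
  qed
  show "2 \<le> ncomp ({1..d + 2} - {2}) ?R"
    by (rule ncomp_ge2[OF _ _ _ nc]) (use d in auto)
  show "2 \<in> {1..d+2}" by simp
qed

lemma Gp_conn: "connected_gg (d + 2) (Gp b d)"
  unfolding connected_gg_def using Gp_ecomp_full by simp

lemma Gp_not_ideal: "\<not> ideal_general_position (d + 2) (Qp b d)"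
proof
  assume "ideal_general_position (d + 2) (Qp b d)"
  then have inj: "inj_on (Qp b d) {1..d+2}" unfolding ideal_general_position_def by blast
  have "Qp b d 1 = Qp b d (d + 2)" unfolding Qp_def by simp
  from inj_onD[OF inj this] show False by simp
qed


context
  fixes b :: "nat \<Rightarrow> 'a::euclidean_space" and d :: nat
  assumes hb: "bij_betw b {1..d} Basis"
begin

lemma bb: "i \<in> {1..d} \<Longrightarrow> j \<in> {1..d} \<Longrightarrow> b i \<bullet> b j = (if i = j then 1 else 0)"
proof -
  assume ij: "i \<in> {1..d}" "j \<in> {1..d}"
  have "b i \<in> Basis" "b j \<in> Basis" using bij_betwE[OF hb] ij by blast+
  moreover have "b i = b j \<longleftrightarrow> i = j" using inj_on_eq_iff[OF bij_betw_imp_inj_on[OF hb] ij] .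
  ultimately show ?thesis using inner_Basis[of "b i" "b j"] by simp
qed

definition "wv = (\<Sum>i\<in>{1..d}. b i)"

lemma wb: "j \<in> {1..d} \<Longrightarrow> wv \<bullet> b j = 1"
proof -
  assume j: "j \<in> {1..d}"
  have "wv \<bullet> b j = (\<Sum>i\<in>{1..d}. b i \<bullet> b j)" unfolding wv_def by (simp add: inner_sum_left)
  also have "\<dots> = (\<Sum>i\<in>{1..d}. if i = j then 1 else 0)" by (rule sum.cong) (use j bb in auto)
  also have "\<dots> = 1" using j by simp
  finally show ?thesis .
qed

lemma dir_k: "k \<in> {1..d} \<Longrightarrow> dirv (Gp b d) (Qp b d) k = b k"
  unfolding dirv_def Qp_def by (simp add: sum.atLeastLessThan_Suc)

lemma dir_last: "dirv (Gp b d) (Qp b d) (d + 1) = - wv"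
proof -
  have "{1..<Suc d} = {1..d}" by auto
  then show ?thesis unfolding dirv_def Qp_def wv_def by simp
qed

lemma hyp_k: "k \<in> {1..d} \<Longrightarrow> hyp (Gp b d) (Qp b d) k = {P. b k \<bullet> P = 0}"
  unfolding hyp_eq Gp_kap using dir_k by (simp add: tp_def)

lemma hyp_last: "hyp (Gp b d) (Qp b d) (d + 1) = {P. wv \<bullet> P = -1}"
  unfolding hyp_eq Gp_kap dir_last by (auto simp: tp_def)

lemma hyp_last': "hyp (Gp b d) (Qp b d) (Suc d) = {P. wv \<bullet> P = -1}"
  using hyp_last by simp

lemma edge_cases: "k \<in> {1..d+1} \<Longrightarrow> k \<in> {1..d} \<or> k = d + 1"
  by auto

lemma pt_mem:
  assumes j: "j \<in> {1..d}" "j \<notin> A" and A: "A \<subseteq> {1..d+1}"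
  shows "- b j \<in> \<Inter> (hyp (Gp b d) (Qp b d) ` A)"
proof -
  have "- b j \<in> hyp (Gp b d) (Qp b d) k" if k: "k \<in> A" for k
  proof (cases "k = d + 1")
    case True then show ?thesis using wb[OF j(1)] by (simp add: hyp_last hyp_last')
  next
    case False
    then have k1: "k \<in> {1..d}" using k A by auto
    have "k \<noteq> j" using k j by auto
    then show ?thesis using bb[OF k1 j(1)] by (simp add: hyp_k[OF k1])
  qed
  then show ?thesis by blast
qed

lemma zero_mem:
  assumes "d + 1 \<notin> A" "A \<subseteq> {1..d+1}"
  shows "0 \<in> \<Inter> (hyp (Gp b d) (Qp b d) ` A)"
proof -
  have "0 \<in> hyp (Gp b d) (Qp b d) k" if k: "k \<in> A" for k
  proof -
    have "k \<in> {1..d+1}" "k \<noteq> d + 1" using k assms by auto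
    then have "k \<in> {1..d}" by auto
    then show ?thesis by (simp add: hyp_k)
  qed
  then show ?thesis by blast
qed

lemma alpha_full: "\<Inter> (hyp (Gp b d) (Qp b d) ` {1..d+1}) = {}"
proof (rule ccontr)
  assume "\<Inter> (hyp (Gp b d) (Qp b d) ` {1..d+1}) \<noteq> {}"
  then obtain P where P: "P \<in> \<Inter> (hyp (Gp b d) (Qp b d) ` {1..d+1})" by blast
  have "P \<bullet> u = 0" if u: "u \<in> Basis" for u
  proof -
    have "u \<in> b ` {1..d}" using hb u by (simp add: bij_betw_def)
    then obtain k where k: "k \<in> {1..d}" "u = b k" by blast
    then have "P \<in> hyp (Gp b d) (Qp b d) k" using P by auto
    then show ?thesis using k by (simp add: hyp_k inner_commute)
  qed
  then have "P = 0" using euclidean_all_zero_iff by blast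
  moreover have "P \<in> hyp (Gp b d) (Qp b d) (d + 1)" using P by auto
  ultimately show False by (simp add: hyp_last hyp_last')
qed

lemma alpha_Eof:
  assumes A: "A \<subseteq> {1..d+1}" "A \<noteq> {1..d+1}"
  shows "Eof (Gp b d) (Qp b d) (\<Inter> (hyp (Gp b d) (Qp b d) ` A)) = A"
    "\<Inter> (hyp (Gp b d) (Qp b d) ` A) \<noteq> {}"
proof -
  show "\<Inter> (hyp (Gp b d) (Qp b d) ` A) \<noteq> {}"
  proof (cases "d + 1 \<in> A")
    case False then show ?thesis using zero_mem[OF False A(1)] by blast
  next
    case True
    obtain k where k: "k \<in> {1..d+1}" "k \<notin> A" using A by blast
    then have "k \<noteq> d + 1" using True by blast
    then have "k \<in> {1..d}" using k(1) by auto
    then obtain j where "j \<in> {1..d}" "j \<notin> A" using k(2) by blast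
    then show ?thesis using pt_mem A(1) by blast
  qed
  show "Eof (Gp b d) (Qp b d) (\<Inter> (hyp (Gp b d) (Qp b d) ` A)) = A"
  proof (rule set_eqI, rule iffI)
    fix k assume "k \<in> Eof (Gp b d) (Qp b d) (\<Inter> (hyp (Gp b d) (Qp b d) ` A))"
    then have k: "k \<in> {1..d+1}" "\<Inter> (hyp (Gp b d) (Qp b d) ` A) \<subseteq> hyp (Gp b d) (Qp b d) k"
      unfolding Eof_def by auto
    show "k \<in> A"
    proof (rule ccontr)
      assume kA: "k \<notin> A"
      show False
      proof (cases "k = d + 1")
        case True
        then have "0 \<in> hyp (Gp b d) (Qp b d) k" using zero_mem[OF _ A(1)] kA k(2) by blast
        then show False using True by (simp add: hyp_last hyp_last')
      next
        case False
        then have k1: "k \<in> {1..d}" using k(1) by auto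
        then have "- b k \<in> hyp (Gp b d) (Qp b d) k" using pt_mem[OF k1 kA A(1)] k(2) by blast
        then show False using bb[OF k1 k1] by (simp add: hyp_k[OF k1])
      qed
    qed
  next
    fix k assume "k \<in> A"
    then show "k \<in> Eof (Gp b d) (Qp b d) (\<Inter> (hyp (Gp b d) (Qp b d) ` A))"
      unfolding Eof_def using A(1) by auto
  qed
qed

lemma Gp_gp:
  assumes d: "d = DIM('a)"
  shows "general_position (Gp b d) (d + 2) (Qp b d)"
  unfolding gp_iff d[symmetric] Gp_BF
proof (rule set_eqI, rule iffI)
  fix A assume "A \<in> Eof (Gp b d) (Qp b d) ` arr_lattice (Gp b d) (Qp b d)"
  then obtain B where B: "B \<subseteq> {1..d+1}" "\<Inter> (hyp (Gp b d) (Qp b d) ` B) \<noteq> {}"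
    "A = Eof (Gp b d) (Qp b d) (\<Inter> (hyp (Gp b d) (Qp b d) ` B))"
    unfolding arr_lattice_def by auto
  have "B \<noteq> {1..d+1}" using B(2) alpha_full by auto
  then show "A \<in> {A. A \<subseteq> {1..d + 1} \<and> A \<noteq> {1..d + 1}}" using alpha_Eof[OF B(1)] B(3) B(1) by simp
next
  fix A assume "A \<in> {A. A \<subseteq> {1..d + 1} \<and> A \<noteq> {1..d + 1}}"
  then have A: "A \<subseteq> {1..d+1}" "A \<noteq> {1..d+1}" by simp_all
  have "\<Inter> (hyp (Gp b d) (Qp b d) ` A) \<in> arr_lattice (Gp b d) (Qp b d)"
    unfolding arr_lattice_def using A alpha_Eof(2)[OF A] by auto
  then show "A \<in> Eof (Gp b d) (Qp b d) ` arr_lattice (Gp b d) (Qp b d)"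
    using alpha_Eof(1)[OF A] by (metis imageI)
qed

end

lemma example2:
  "\<exists>(n'::nat) (G'::nat gain_graph) (Q'::nat \<Rightarrow> 'a::euclidean_space).
     gain_graph n' G' \<and> connected_gg n' G' \<and> separable_gg n' G' \<and>
     general_position G' n' Q' \<and> \<not> ideal_general_position n' Q'"
proof -
  obtain b :: "nat \<Rightarrow> 'a" where hb: "bij_betw b {1..card (Basis::'a set)} Basis"
    using ex_bij_betw_nat_finite_1[OF finite_Basis] by blast
  let ?d = "card (Basis::'a set)"
  have d1: "1 \<le> ?d" using DIM_positive[where 'a='a] by linarith
  show ?thesis
  proof (intro exI conjI)
    show "gain_graph (?d + 2) (Gp b ?d)" by (rule Gp_gg)
    show "connected_gg (?d + 2) (Gp b ?d)" by (rule Gp_conn)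
    show "separable_gg (?d + 2) (Gp b ?d)" by (rule Gp_sep[OF d1])
    show "general_position (Gp b ?d) (?d + 2) (Qp b ?d)" by (rule Gp_gp[OF hb refl])
    show "\<not> ideal_general_position (?d + 2) (Qp b ?d)" by (rule Gp_not_ideal)
  qed
qed


theorem theorem6p3:
  fixes G :: "'e gain_graph" and n :: nat and Q :: "nat \<Rightarrow> 'a::euclidean_space"
  assumes "gain_graph n G"
  shows "(ideal_general_position n Q \<longrightarrow> simple_position n Q)
    \<and> (general_position G n Q \<longleftrightarrow> proj_general_position G n Q)
    \<and> (completely_general_position G n Q \<longleftrightarrow> proj_completely_general_position G n Q)
    \<and> (complete_gg n G \<longrightarrow> general_position G n Q \<longrightarrow> ideal_general_position n Q)
    \<and> (\<exists>(n'::nat) (G'::nat gain_graph) (Q'::nat \<Rightarrow> 'a).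
          gain_graph n' G' \<and> disconnected_gg n' G' \<and>
          general_position G' n' Q' \<and> \<not> ideal_general_position n' Q')
    \<and> (\<exists>(n'::nat) (G'::nat gain_graph) (Q'::nat \<Rightarrow> 'a).
          gain_graph n' G' \<and> connected_gg n' G' \<and> separable_gg n' G' \<and>
          general_position G' n' Q' \<and> \<not> ideal_general_position n' Q')"
proof (intro conjI)
  show "ideal_general_position n Q \<longrightarrow> simple_position n Q" using part_i by blast
  show "general_position G n Q \<longleftrightarrow> proj_general_position G n Q"
    using gp_to_pgp[OF assms] pgp_to_gp[OF assms] by blast
  show "completely_general_position G n Q \<longleftrightarrow> proj_completely_general_position G n Q"
    unfolding completely_general_position_def proj_completely_general_position_def
    using gp_to_pgp[OF assms] pgp_to_gp[OF assms] by blast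
  show "complete_gg n G \<longrightarrow> general_position G n Q \<longrightarrow> ideal_general_position n Q"
    using part_iv[OF assms] by blast
  show "\<exists>(n'::nat) (G'::nat gain_graph) (Q'::nat \<Rightarrow> 'a).
          gain_graph n' G' \<and> disconnected_gg n' G' \<and>
          general_position G' n' Q' \<and> \<not> ideal_general_position n' Q'"
    by (rule example1)
  show "\<exists>(n'::nat) (G'::nat gain_graph) (Q'::nat \<Rightarrow> 'a).
          gain_graph n' G' \<and> connected_gg n' G' \<and> separable_gg n' G' \<and>
          general_position G' n' Q' \<and> \<not> ideal_general_position n' Q'"
    by (rule example2)
qed

end
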